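(* For every precubical set $B$ there exists a stream covering $\rho: E\rightarrow \vec{|B|}$ such that the preorder $\leqslant_E$ on $E$ is antisymmetric (i.e. a partial order).
   Context: A circulation on a topological space $X$ is a function assigning to each open $V\subset X$ a preorder $\leqslant_V$ on $V$ such that for every collection $\mathcal{O}$ of open subsets of $X$, $\leqslant_{\bigcup\mathcal{O}}$ is the preorder on $\bigcup\mathcal{O}$ with smallest graph containing $\bigcup_{V\in\mathcal{O}}\mathrm{graph}(\leqslant_V)$. A stream is a space with a circulation; $\leqslant_X$ denotes the preorder assigned to $X$ itself. A stream map $f:X\to Y$ is a continuous map with $f(x)\leqslant_V f(y)$ whenever $x\leqslant_{f^{-1}V}y$, for every open $V\subset Y$. The forgetful functor $U$ from streams to spaces is topological; in particular the category of streams is complete and cocomplete, with limits and colimits computed on underlying spaces (colimits carry the final circulation). An open substream of $X$ is an open $V\subset X$ with the circulation $W\mapsto \leqslant_W$ for open $W\subset V$. A stream covering is a surjective stream map $\rho:E\to B$ such that $B$ is covered by open substreams whose preimages under $\rho$ are disjoint unions of open substreams on each of which $\rho$ restricts to an isomorphism of streams onto the corresponding open substream of $B$. Precubical sets: let $[0]=\{0\}$, $[1]=\{0<1\}$, and let $\square$ be the smallest subcategory of the category of posets and monotone maps that is closed under cartesian products (with unit $[0]$) and contains $\delta_-,\delta_+:[0]\to[1]$ (sending $0$ to $0$, resp. $1$); its objects are the $[1]^n$. A precubical set is a functor $X:\square^{op}\to\mathbf{Set}$; write $X_n=X([1]^n)$. Let $\vec{\square}[1]$ be the unit interval $\mathbb{I}=[0,1]$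 with circulation: for open $V\subset\mathbb{I}$, $x\leqslant_V y$ iff $x\le y$ and $[x,y]\subset V$. Let $\vec{\square}[n]$ be the $n$-fold product of $\vec{\square}[1]$ in streams (underlying space $\mathbb{I}^n$); each $\square$-morphism $[1]^m\to[1]^n$ extends linearly to a stream map $\vec\square[m]\to\vec\square[n]$, giving a functor $\vec\square$ from $\square$ to streams. The stream realization of $X$ is the coend $\vec{|X|}=\int^{[1]^n\in\square} X_n\cdot\vec{\square}[n]$ in the category of streams; its underlying space is the usual geometric realization $|X|$ (a CW complex with one $n$-cell for each element of $X_n$). *)

theory Defs
  imports "HOL-Analysis.Analysis"
begin

text \<open>A circulation assigns to each set a relation (its graph); only the values on
open sets matter.  A stream is a topology together with a circulation.\<close>

type_synonym 'a circ = "'a set \<Rightarrow> ('a \<times> 'a) set"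
type_synonym 'a stream = "'a topology \<times> 'a circ"

definition preorder_on :: "'a set \<Rightarrow> ('a \<times> 'a) set \<Rightarrow> bool" where
  "preorder_on S R \<longleftrightarrow> R \<subseteq> S \<times> S \<and> refl_on S R \<and> trans R"

definition is_circulation :: "'a topology \<Rightarrow> 'a circ \<Rightarrow> bool" where
  "is_circulation T C \<longleftrightarrow>
     (\<forall>V. openin T V \<longrightarrow> preorder_on V (C V)) \<and>
     (\<forall>\<O>. (\<forall>V\<in>\<O>. openin T V) \<longrightarrow>
        C (\<Union>\<O>) = \<Inter>{R. preorder_on (\<Union>\<O>) R \<and> (\<Union>V\<in>\<O>. C V) \<subseteq> R})"

definition is_stream :: "'a stream \<Rightarrow> bool" where
  "is_stream X \<longleftrightarrow> is_circulation (fst X) (snd X)"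

definition leq :: "'a stream \<Rightarrow> ('a \<times> 'a) set" where
  "leq X = snd X (topspace (fst X))"

definition stream_map :: "'a stream \<Rightarrow> 'b stream \<Rightarrow> ('a \<Rightarrow> 'b) \<Rightarrow> bool" where
  "stream_map X Y f \<longleftrightarrow> continuous_map (fst X) (fst Y) f \<and>
     (\<forall>V. openin (fst Y) V \<longrightarrow>
        (\<forall>x y. (x, y) \<in> snd X {z \<in> topspace (fst X). f z \<in> V} \<longrightarrow> (f x, f y) \<in> snd Y V))"

definition stream_iso :: "'a stream \<Rightarrow> 'b stream \<Rightarrow> ('a \<Rightarrow> 'b) \<Rightarrow> bool" where
  "stream_iso X Y f \<longleftrightarrow> stream_map X Y f \<and>
     (\<exists>g. stream_map Y X g \<and> (\<forall>x\<in>topspace (fst X). g (f x) = x) \<and>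
          (\<forall>y\<in>topspace (fst Y). f (g y) = y))"

text \<open>Open substream on an open set V: subspace topology, circulation W \<mapsto> \<le>_W
(for W open in V, which are exactly the open sets of X contained in V).\<close>
definition open_substream :: "'a stream \<Rightarrow> 'a set \<Rightarrow> 'a stream" where
  "open_substream X V = (subtopology (fst X) V, snd X)"

definition stream_covering :: "'a stream \<Rightarrow> 'b stream \<Rightarrow> ('a \<Rightarrow> 'b) \<Rightarrow> bool" where
  "stream_covering E B \<rho> \<longleftrightarrow> is_stream E \<and> is_stream B \<and> stream_map E B \<rho> \<and>
     \<rho> ` topspace (fst E) = topspace (fst B) \<and>
     (\<exists>\<U>. (\<forall>U\<in>\<U>. openin (fst B) U) \<and> \<Union>\<U> = topspace (fst B) \<and>
        (\<forall>U\<in>\<U>. \<exists>\<W>. (\<forall>W\<in>\<W>. openin (fst E) W) \<and> pairwise disjnt \<W> \<and>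
            \<Union>\<W> = {e \<in> topspace (fst E). \<rho> e \<in> U} \<and>
            (\<forall>W\<in>\<W>. stream_iso (open_substream E W) (open_substream B U) \<rho>)))"

text \<open>Vertices of [1]^n are boolean lists of length n (False = 0, True = 1); the
product [1]^a \<times> [1]^b is identified with [1]^(a+b) via list append.  A morphism
[1]^m \<rightarrow> [1]^n is recorded as (m, n, f) where f is restricted to lists of length m
(returning [] elsewhere), so that equal maps are equal HOL functions.\<close>

definition restr :: "nat \<Rightarrow> (bool list \<Rightarrow> bool list) \<Rightarrow> bool list \<Rightarrow> bool list" where
  "restr m f = (\<lambda>v. if length v = m then f v else [])"

inductive_set box_mor :: "(nat \<times> nat \<times> (bool list \<Rightarrow> bool list)) set" where
  id0: "(0, 0, restr 0 (\<lambda>v. v)) \<in> box_mor"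
| id1: "(1, 1, restr 1 (\<lambda>v. v)) \<in> box_mor"
| delta_minus: "(0, 1, restr 0 (\<lambda>v. [False])) \<in> box_mor"
| delta_plus: "(0, 1, restr 0 (\<lambda>v. [True])) \<in> box_mor"
| prod: "(a, b, f) \<in> box_mor \<Longrightarrow> (c, d, g) \<in> box_mor \<Longrightarrow>
     (a + c, b + d, restr (a + c) (\<lambda>v. f (take a v) @ g (drop a v))) \<in> box_mor"
| comp: "(a, b, f) \<in> box_mor \<Longrightarrow> (b, c, g) \<in> box_mor \<Longrightarrow>
     (a, c, restr a (\<lambda>v. g (f v))) \<in> box_mor"

text \<open>A precubical set (functor \<open>\<box>\<^sup>o\<^sup>p \<rightarrow> Set\<close>): sets X_n of n-cells and, for each
morphism (m, n, f), a map act m n f : X_n \<rightarrow> X_m, functorially.\<close>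

type_synonym 'c precubical = "(nat \<Rightarrow> 'c set) \<times> (nat \<Rightarrow> nat \<Rightarrow> (bool list \<Rightarrow> bool list) \<Rightarrow> 'c \<Rightarrow> 'c)"

definition precubical_set :: "'c precubical \<Rightarrow> bool" where
  "precubical_set X \<longleftrightarrow>
     (\<forall>m n f. (m, n, f) \<in> box_mor \<longrightarrow> (\<forall>x\<in>fst X n. snd X m n f x \<in> fst X m)) \<and>
     (\<forall>n. \<forall>x\<in>fst X n. snd X n n (restr n (\<lambda>v. v)) x = x) \<and>
     (\<forall>l m n f g. (l, m, f) \<in> box_mor \<longrightarrow> (m, n, g) \<in> box_mor \<longrightarrow>
        (\<forall>x\<in>fst X n. snd X l n (restr l (\<lambda>v. g (f v))) x = snd X l m f (snd X m n g x)))"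

text \<open>Points of I^n are functions nat \<Rightarrow> real, extensional outside {..<n}.\<close>
definition cube :: "nat \<Rightarrow> (nat \<Rightarrow> real) topology" where
  "cube n = product_topology (\<lambda>_. top_of_set {0..1::real}) {..<n}"

definition dI :: "real stream" where
  "dI = (top_of_set {0..1}, (\<lambda>V. {(x, y). x \<le> y \<and> {x..y} \<subseteq> V}))"

text \<open>\<open>\<box>\<close>[n] is the n-fold product of \<open>\<box>\<close>[1] in streams: the initial (= largest)
circulation on I^n making all coordinate projections stream maps.\<close>
definition dcube_circ :: "nat \<Rightarrow> (nat \<Rightarrow> real) circ" where
  "dcube_circ n = (SOME C. is_circulation (cube n) C \<and>
      (\<forall>i<n. stream_map (cube n, C) dI (\<lambda>t. t i)) \<and>
      (\<forall>C'. is_circulation (cube n) C' \<and> (\<forall>i<n. stream_map (cube n, C') dI (\<lambda>t. t i)) \<longrightarrow>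
           (\<forall>V. openin (cube n) V \<longrightarrow> C' V \<subseteq> C V)))"

definition dcube :: "nat \<Rightarrow> (nat \<Rightarrow> real) stream" where
  "dcube n = (cube n, dcube_circ n)"

text \<open>Linear (multilinear) extension of a vertex map [1]^m \<rightarrow> [1]^n to I^m \<rightarrow> I^n.\<close>
definition lin_ext :: "nat \<Rightarrow> nat \<Rightarrow> (bool list \<Rightarrow> bool list) \<Rightarrow> (nat \<Rightarrow> real) \<Rightarrow> nat \<Rightarrow> real" where
  "lin_ext m n f t = (\<lambda>i. if i < n then
      (\<Sum>v\<in>{v. length v = m}. (\<Prod>j<m. if v ! j then t j else 1 - t j) * (if f v ! i then 1 else 0))
     else undefined)"

type_synonym 'c rpt = "(nat \<times> 'c \<times> (nat \<Rightarrow> real)) set"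

definition cells :: "'c precubical \<Rightarrow> (nat \<times> 'c \<times> (nat \<Rightarrow> real)) set" where
  "cells X = {(n, x, t). x \<in> fst X n \<and> t \<in> topspace (cube n)}"

definition coend_gen :: "'c precubical \<Rightarrow> ((nat \<times> 'c \<times> (nat \<Rightarrow> real)) \<times> (nat \<times> 'c \<times> (nat \<Rightarrow> real))) set" where
  "coend_gen X = {((m, snd X m n f x, t), (n, x, lin_ext m n f t)) | m n f x t.
      (m, n, f) \<in> box_mor \<and> x \<in> fst X n \<and> t \<in> topspace (cube m)}"

definition coend_rel :: "'c precubical \<Rightarrow> ((nat \<times> 'c \<times> (nat \<Rightarrow> real)) \<times> (nat \<times> 'c \<times> (nat \<Rightarrow> real))) set" where
  "coend_rel X = \<Inter>{R. equiv (cells X) R \<and> coend_gen X \<subseteq> R}"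

definition real_pt :: "'c precubical \<Rightarrow> nat \<Rightarrow> 'c \<Rightarrow> (nat \<Rightarrow> real) \<Rightarrow> 'c rpt" where
  "real_pt X n x t = coend_rel X `` {(n, x, t)}"

text \<open>Underlying space: quotient (final) topology w.r.t. the characteristic maps.\<close>
definition real_top :: "'c precubical \<Rightarrow> 'c rpt topology" where
  "real_top X = topology (\<lambda>U. U \<subseteq> cells X // coend_rel X \<and>
      (\<forall>n. \<forall>x\<in>fst X n. openin (cube n) {t \<in> topspace (cube n). real_pt X n x t \<in> U}))"

text \<open>Circulation: the final (= smallest) circulation making all characteristic maps
\<open>\<box>\<close>[n] \<rightarrow> |X| stream maps (colimits in streams carry the final circulation).\<close>
definition real_circ :: "'c precubical \<Rightarrow> 'c rpt circ" where
  "real_circ X = (SOME C. is_circulation (real_top X) C \<and>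
      (\<forall>n. \<forall>x\<in>fst X n. stream_map (dcube n) (real_top X, C) (real_pt X n x)) \<and>
      (\<forall>C'. is_circulation (real_top X) C' \<and>
            (\<forall>n. \<forall>x\<in>fst X n. stream_map (dcube n) (real_top X, C') (real_pt X n x)) \<longrightarrow>
           (\<forall>V. openin (real_top X) V \<longrightarrow> C V \<subseteq> C' V)))"

definition stream_realization :: "'c precubical \<Rightarrow> 'c rpt stream" where
  "stream_realization X = (real_top X, real_circ X)"

end

theory Submission
  imports Defs
begin

definition pc :: "'a set \<Rightarrow> ('a \<times> 'a) set \<Rightarrow> ('a \<times> 'a) set" where
  "pc S G = \<Inter>{R. preorder_on S R \<and> G \<subseteq> R}"

lemma is_circulation_iff:
  "is_circulation T C \<longleftrightarrow> (\<forall>V. openin T V \<longrightarrow> preorder_on V (C V)) \<and>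
     (\<forall>\<O>. (\<forall>V\<in>\<O>. openin T V) \<longrightarrow> C (\<Union>\<O>) = pc (\<Union>\<O>) (\<Union>V\<in>\<O>. C V))"
  by (simp add: is_circulation_def pc_def)

lemma pc_least: "preorder_on S R \<Longrightarrow> G \<subseteq> R \<Longrightarrow> pc S G \<subseteq> R"
  unfolding pc_def by blast

lemma pc_gen: "G \<subseteq> pc S G"
  unfolding pc_def by blast

lemma preorder_onD1: "preorder_on S R \<Longrightarrow> R \<subseteq> S \<times> S"
  unfolding preorder_on_def by blast
lemma preorder_onD2: "preorder_on S R \<Longrightarrow> x \<in> S \<Longrightarrow> (x,x) \<in> R"
  unfolding preorder_on_def refl_on_def by blast
lemma preorder_onD3: "preorder_on S R \<Longrightarrow> (x,y) \<in> R \<Longrightarrow> (y,z) \<in> R \<Longrightarrow> (x,z) \<in> R"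
  unfolding preorder_on_def by (meson transD)
lemmas preorder_onD = preorder_onD1 preorder_onD2 preorder_onD3

lemma preorder_onI:
  "R \<subseteq> S \<times> S \<Longrightarrow> (\<And>x. x \<in> S \<Longrightarrow> (x,x) \<in> R) \<Longrightarrow>
   (\<And>x y z. (x,y) \<in> R \<Longrightarrow> (y,z) \<in> R \<Longrightarrow> (x,z) \<in> R) \<Longrightarrow> preorder_on S R"
  unfolding preorder_on_def refl_on_def by (blast intro: transI)

lemma pc_preorder: assumes "G \<subseteq> S \<times> S" shows "preorder_on S (pc S G)"
proof -
  have "preorder_on S (S \<times> S)" by (rule preorder_onI) auto
  then have ne: "S \<times> S \<in> {R. preorder_on S R \<and> G \<subseteq> R}"
    using assms by blast
  show ?thesis unfolding pc_def
  proof (rule preorder_onI)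
    show "\<Inter>{R. preorder_on S R \<and> G \<subseteq> R} \<subseteq> S \<times> S" using ne by (rule Inter_lower)
    show "(x,x) \<in> \<Inter>{R. preorder_on S R \<and> G \<subseteq> R}" if "x \<in> S" for x
    proof (rule InterI)
      fix R assume "R \<in> {R. preorder_on S R \<and> G \<subseteq> R}"
      then have "preorder_on S R" by blast
      then show "(x,x) \<in> R" using that by (rule preorder_onD2)
    qed
    show "(x,z) \<in> \<Inter>{R. preorder_on S R \<and> G \<subseteq> R}"
      if a: "(x,y) \<in> \<Inter>{R. preorder_on S R \<and> G \<subseteq> R}" and b: "(y,z) \<in> \<Inter>{R. preorder_on S R \<and> G \<subseteq> R}" for x y z
    proof (rule InterI)
      fix R assume R: "R \<in> {R. preorder_on S R \<and> G \<subseteq> R}"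
      then have "(x,y) \<in> R" "(y,z) \<in> R" using a b by (meson InterE)+
      moreover have "preorder_on S R" using R by blast
      ultimately show "(x,z) \<in> R" by (meson preorder_onD3)
    qed
  qed
qed

lemma circ_preorder: "is_circulation T C \<Longrightarrow> openin T V \<Longrightarrow> preorder_on V (C V)"
  by (simp add: is_circulation_def)

lemma circ_union: "is_circulation T C \<Longrightarrow> (\<And>V. V \<in> \<O> \<Longrightarrow> openin T V) \<Longrightarrow>
    C (\<Union>\<O>) = pc (\<Union>\<O>) (\<Union>V\<in>\<O>. C V)"
  by (simp add: is_circulation_iff)

lemma circ_mono:
  assumes "is_circulation T C" "openin T V" "openin T W" "V \<subseteq> W"
  shows "C V \<subseteq> C W"
proof -
  have "C (\<Union>{V,W}) = pc (\<Union>{V,W}) (\<Union>U\<in>{V,W}. C U)"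
    by (rule circ_union[OF assms(1)]) (use assms(2,3) in blast)
  moreover have "\<Union>{V,W} = W" using assms(4) by blast
  ultimately have "C W = pc W (\<Union>U\<in>{V,W}. C U)" by simp
  moreover have "C V \<subseteq> (\<Union>U\<in>{V,W}. C U)" by blast
  ultimately show ?thesis using pc_gen[of "\<Union>U\<in>{V,W}. C U" W] by (metis subset_trans)
qed

lemma topspace_cube: "topspace (cube n) = PiE {..<n} (\<lambda>_. {0..1})"
  by (simp add: cube_def)

definition seg :: "(nat\<Rightarrow>real) \<Rightarrow> (nat\<Rightarrow>real) \<Rightarrow> real \<Rightarrow> nat \<Rightarrow> real" where
  "seg s t \<tau> = (\<lambda>i. s i + \<tau> * (t i - s i))"

definition lec :: "nat \<Rightarrow> (nat\<Rightarrow>real) \<Rightarrow> (nat\<Rightarrow>real) \<Rightarrow> bool" where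
  "lec n s t = (\<forall>i<n. s i \<le> t i)"

definition Sst :: "nat \<Rightarrow> (nat\<Rightarrow>real) set \<Rightarrow> ((nat\<Rightarrow>real) \<times> (nat\<Rightarrow>real)) set" where
  "Sst n V = {(s,t). s \<in> V \<and> t \<in> V \<and> lec n s t \<and> (\<forall>\<tau>\<in>{0..1}. seg s t \<tau> \<in> V)}"

definition M :: "nat \<Rightarrow> (nat\<Rightarrow>real) set \<Rightarrow> ((nat\<Rightarrow>real) \<times> (nat\<Rightarrow>real)) set" where
  "M n V = pc V (Sst n V)"

lemma seg_0 [simp]: "seg s t 0 = s" and seg_1 [simp]: "seg s t 1 = t"
  by (auto simp: seg_def)

lemma seg_seg: "seg (seg s t a) (seg s t b) \<tau> = seg s t (a + \<tau> * (b - a))"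
  by (auto simp: seg_def algebra_simps)

lemma seg_in_cube:
  assumes "s \<in> topspace (cube n)" "t \<in> topspace (cube n)" "\<tau> \<in> {0..1}"
  shows "seg s t \<tau> \<in> topspace (cube n)"
proof -
  have conv: "s + \<tau> * (t - s) \<in> {0..1}" if "s \<in> {0..1}" "t \<in> {0..1}" for s t :: real
  proof -
    have "s + \<tau> * (t - s) = (1 - \<tau>) * s + \<tau> * t" by (simp add: algebra_simps)
    moreover have "0 \<le> (1 - \<tau>) * s + \<tau> * t" using that assms(3) by (intro add_nonneg_nonneg mult_nonneg_nonneg) auto
    moreover have "(1 - \<tau>) * s + \<tau> * t \<le> (1 - \<tau>) * 1 + \<tau> * 1"
      using that assms(3) by (intro add_mono mult_left_mono) auto
    ultimately show ?thesis by simp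
  qed
  have "s \<in> extensional {..<n}" "t \<in> extensional {..<n}" "\<forall>i<n. s i \<in> {0..1} \<and> t i \<in> {0..1}"
    using assms unfolding topspace_cube PiE_iff by auto
  then show ?thesis unfolding topspace_cube seg_def
  proof (intro PiE_I)
    fix i assume "i \<in> {..<n}"
    then show "s i + \<tau> * (t i - s i) \<in> {0..1}"
    proof -
      have "s i \<in> {0..1}" "t i \<in> {0..1}" using \<open>i \<in> {..<n}\<close> \<open>\<forall>i<n. s i \<in> {0..1} \<and> t i \<in> {0..1}\<close> by auto
      then show ?thesis by (rule conv)
    qed
  next
    fix i assume "i \<notin> {..<n}"
    then have "s i = undefined" "t i = undefined"
      using \<open>s \<in> extensional {..<n}\<close> \<open>t \<in> extensional {..<n}\<close> by (metis extensional_arb)+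
    then show "s i + \<tau> * (t i - s i) = undefined" by simp
  qed
qed

lemma seg_cont:
  assumes "s \<in> topspace (cube n)" "t \<in> topspace (cube n)"
  shows "continuous_map (top_of_set {0..1}) (cube n) (seg s t)"
  unfolding cube_def continuous_map_componentwise
proof (intro conjI ballI)
  show "seg s t ` topspace (top_of_set {0..1}) \<subseteq> extensional {..<n}"
    using seg_in_cube[OF assms] by (auto simp: topspace_cube PiE_iff)
  fix k assume "k \<in> {..<n}"
  show "continuous_map (top_of_set {0..1}) (top_of_set {0..1}) (\<lambda>x. seg s t x k)"
    unfolding continuous_map_in_subtopology
  proof
    show "continuous_map (top_of_set {0..1}) euclidean (\<lambda>x. seg s t x k)"
      unfolding seg_def continuous_map_iff_continuous by (intro continuous_intros)
    show "(\<lambda>x. seg s t x k) \<in> topspace (top_of_set {0..1}) \<rightarrow> {0..1}"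
      using seg_in_cube[OF assms] \<open>k \<in> {..<n}\<close> by (auto simp: topspace_cube PiE_iff)
  qed
qed


lemma Sst_sub: "Sst n V \<subseteq> V \<times> V"
  unfolding Sst_def by blast

lemma M_preorder: "preorder_on V (M n V)"
  unfolding M_def by (rule pc_preorder[OF Sst_sub])

lemma Sst_mono: "V \<subseteq> W \<Longrightarrow> Sst n V \<subseteq> Sst n W"
  unfolding Sst_def by blast

lemma M_mono: assumes "V \<subseteq> W" shows "M n V \<subseteq> M n W"
proof -
  have "M n V \<subseteq> M n W \<inter> V \<times> V" unfolding M_def
  proof (rule pc_least)
    show "preorder_on V (pc W (Sst n W) \<inter> V \<times> V)"
    proof (rule preorder_onI)
      show "pc W (Sst n W) \<inter> V \<times> V \<subseteq> V \<times> V" by blast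
      fix x assume "x \<in> V"
      then show "(x,x) \<in> pc W (Sst n W) \<inter> V \<times> V"
        using preorder_onD2[OF M_preorder[of W n, unfolded M_def]] assms by blast
    next
      fix x y z assume "(x,y) \<in> pc W (Sst n W) \<inter> V \<times> V" "(y,z) \<in> pc W (Sst n W) \<inter> V \<times> V"
      then show "(x,z) \<in> pc W (Sst n W) \<inter> V \<times> V"
        using preorder_onD3[OF M_preorder[of W n, unfolded M_def]] by blast
    qed
    show "Sst n V \<subseteq> pc W (Sst n W) \<inter> V \<times> V"
      using Sst_mono[OF assms, of n] pc_gen[of "Sst n W" W] Sst_sub[of n V] by blast
  qed
  then show ?thesis by blast
qed

lemma seg_le:
  assumes "lec n s t" "a \<le> b"
  shows "lec n (seg s t a) (seg s t b)"
  unfolding lec_def seg_def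
proof (intro allI impI)
  fix i assume "i < n"
  then have "0 \<le> t i - s i" using assms(1) unfolding lec_def by auto
  then have "a * (t i - s i) \<le> b * (t i - s i)" using mult_right_mono[OF assms(2)] by blast
  then show "s i + a * (t i - s i) \<le> s i + b * (t i - s i)" by simp
qed

lemma Sst_chain:
  assumes opens: "\<And>V. V \<in> \<O> \<Longrightarrow> openin (cube n) V"
    and R: "preorder_on (\<Union>\<O>) R" and gen: "\<And>V. V \<in> \<O> \<Longrightarrow> Sst n V \<subseteq> R"
    and st: "(s,t) \<in> Sst n (\<Union>\<O>)"
  shows "(s,t) \<in> R"
proof -
  have s: "s \<in> \<Union>\<O>" and t: "t \<in> \<Union>\<O>" and lec: "lec n s t"
    and segin: "\<And>\<tau>. \<tau> \<in> {0..1} \<Longrightarrow> seg s t \<tau> \<in> \<Union>\<O>"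
    using st unfolding Sst_def by auto
  have sub: "\<Union>\<O> \<subseteq> topspace (cube n)" using opens openin_subset by blast
  have stop: "s \<in> topspace (cube n)" "t \<in> topspace (cube n)" using s t sub by auto
  define p where "p = seg s t"
  have pcont: "continuous_map (top_of_set {0..1}) (cube n) p"
    unfolding p_def by (rule seg_cont[OF stop])
  have "\<forall>V\<in>\<O>. \<exists>K. open K \<and> {\<tau>\<in>{0..1}. p \<tau> \<in> V} = {0..1} \<inter> K"
  proof
    fix V assume "V \<in> \<O>"
    have "openin (top_of_set {0..1}) {\<tau> \<in> topspace (top_of_set {0..1}). p \<tau> \<in> V}"
      by (rule openin_continuous_map_preimage[OF pcont opens[OF \<open>V \<in> \<O>\<close>]])
    then show "\<exists>K. open K \<and> {\<tau>\<in>{0..1}. p \<tau> \<in> V} = {0..1} \<inter> K"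
      by (simp add: openin_open)
  qed
  then obtain K where K: "\<And>V. V \<in> \<O> \<Longrightarrow> open (K V) \<and> {\<tau>\<in>{0..1}. p \<tau> \<in> V} = {0..1} \<inter> K V"
    by metis
  have ne: "K ` \<O> \<noteq> {}" using s by blast
  have cov: "{0..1} \<subseteq> \<Union>(K ` \<O>)"
  proof
    fix \<tau> :: real assume "\<tau> \<in> {0..1}"
    then obtain V where "V \<in> \<O>" "p \<tau> \<in> V" using segin unfolding p_def by blast
    then have "\<tau> \<in> K V" using K[of V] \<open>\<tau> \<in> {0..1}\<close> by blast
    then show "\<tau> \<in> \<Union>(K ` \<O>)" using \<open>V \<in> \<O>\<close> by blast
  qed
  obtain \<delta> where "0 < \<delta>" and \<delta>: "\<And>T. \<lbrakk>T \<subseteq> {0..1}; diameter T < \<delta>\<rbrakk> \<Longrightarrow> \<exists>B\<in>K ` \<O>. T \<subseteq> B"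
    using Lebesgue_number_lemma[OF compact_Icc ne cov] K by blast
  obtain N::nat where N: "N > 1 / \<delta>"
    using reals_Archimedean2 by blast
  then have "N > 0"
    using \<open>0 < \<delta>\<close> by (metis divide_pos_pos of_nat_0_less_iff zero_less_one order.strict_trans)
  have step: "(s, p (real j / N)) \<in> R" if "j \<le> N" for j
    using that
  proof (induction j)
    case 0
    have "(s,s) \<in> R" using preorder_onD2[OF R s] .
    then show ?case unfolding p_def by simp
  next
    case (Suc j)
    define a where "a = real j / N"
    define b where "b = real (Suc j) / N"
    have ab: "0 \<le> a" "a \<le> b" "b \<le> 1" using Suc.prems \<open>N > 0\<close>
      by (auto simp: a_def b_def divide_right_mono)
    have "{a..b} \<subseteq> {0..1}" using ab by auto
    moreover have "diameter {a..b} < \<delta>"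
    proof -
      have "b - a = 1 / N" using \<open>N > 0\<close> unfolding a_def b_def by (simp add: field_simps)
      also have "\<dots> < \<delta>" using N \<open>0 < \<delta>\<close> \<open>N > 0\<close> by (simp add: field_simps)
      finally show ?thesis using ab by simp
    qed
    ultimately obtain V where V: "V \<in> \<O>" "{a..b} \<subseteq> K V" using \<delta> by blast
    have inV: "p \<tau> \<in> V" if "\<tau> \<in> {a..b}" for \<tau>
    proof -
      have "\<tau> \<in> {0..1} \<inter> K V" using that V(2) ab by auto
      then show ?thesis using K[OF V(1)] by blast
    qed
    have "(p a, p b) \<in> Sst n V"
      unfolding Sst_def
    proof (intro CollectI case_prodI conjI ballI)
      show "p a \<in> V" "p b \<in> V" using inV ab by auto
      show "lec n (p a) (p b)" unfolding p_def by (rule seg_le[OF lec ab(2)])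
      fix \<tau> :: real assume "\<tau> \<in> {0..1}"
      then have "a + \<tau> * (b - a) \<in> {a..b}"
      proof -
        have "0 \<le> \<tau> * (b - a)" using \<open>\<tau> \<in> {0..1}\<close> ab by auto
        moreover have "\<tau> * (b - a) \<le> 1 * (b - a)" using \<open>\<tau> \<in> {0..1}\<close> ab
          by (intro mult_right_mono) auto
        ultimately show ?thesis by auto
      qed
      then show "seg (p a) (p b) \<tau> \<in> V" unfolding p_def seg_seg using inV unfolding p_def by blast
    qed
    then have "(p a, p b) \<in> R" using gen[OF V(1)] by blast
    moreover have "(s, p a) \<in> R" using Suc unfolding a_def by simp
    ultimately have "(s, p b) \<in> R" by (meson preorder_onD3[OF R])
    then show ?case unfolding b_def .
  qed
  have "(s, p (real N / N)) \<in> R" using step[of N] by simp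
  then show ?thesis using \<open>N > 0\<close> unfolding p_def by simp
qed

lemma M_circ: "is_circulation (cube n) (M n)"
  unfolding is_circulation_iff
proof (intro conjI allI impI)
  fix V show "preorder_on V (M n V)" by (rule M_preorder)
next
  fix \<O> assume opens: "\<forall>V\<in>\<O>. openin (cube n) V"
  have gsub: "(\<Union>V\<in>\<O>. M n V) \<subseteq> \<Union>\<O> \<times> \<Union>\<O>"
    using preorder_onD1[OF M_preorder] by blast
  have "M n (\<Union>\<O>) \<subseteq> pc (\<Union>\<O>) (\<Union>V\<in>\<O>. M n V)"
    unfolding M_def[of n "\<Union>\<O>"]
  proof (rule pc_least)
    show "preorder_on (\<Union>\<O>) (pc (\<Union>\<O>) (\<Union>V\<in>\<O>. M n V))" by (rule pc_preorder[OF gsub])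
    show "Sst n (\<Union>\<O>) \<subseteq> pc (\<Union>\<O>) (\<Union>V\<in>\<O>. M n V)"
    proof
      fix st assume "st \<in> Sst n (\<Union>\<O>)"
      then obtain s t where st: "st = (s,t)" "(s,t) \<in> Sst n (\<Union>\<O>)" by (cases st) auto
      have "(s,t) \<in> pc (\<Union>\<O>) (\<Union>V\<in>\<O>. M n V)"
      proof (rule Sst_chain[OF _ pc_preorder[OF gsub] _ st(2)])
        show "\<And>V. V \<in> \<O> \<Longrightarrow> openin (cube n) V" using opens by blast
        fix V assume "V \<in> \<O>"
        have "Sst n V \<subseteq> M n V" unfolding M_def by (rule pc_gen)
        also have "\<dots> \<subseteq> (\<Union>V\<in>\<O>. M n V)" using \<open>V \<in> \<O>\<close> by blast
        also have "\<dots> \<subseteq> pc (\<Union>\<O>) (\<Union>V\<in>\<O>. M n V)" by (rule pc_gen)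
        finally show "Sst n V \<subseteq> pc (\<Union>\<O>) (\<Union>V\<in>\<O>. M n V)" .
      qed
      then show "st \<in> pc (\<Union>\<O>) (\<Union>V\<in>\<O>. M n V)" using st by simp
    qed
  qed
  moreover have "pc (\<Union>\<O>) (\<Union>V\<in>\<O>. M n V) \<subseteq> M n (\<Union>\<O>)"
  proof (rule pc_least[OF M_preorder])
    show "(\<Union>V\<in>\<O>. M n V) \<subseteq> M n (\<Union>\<O>)" using M_mono[of _ "\<Union>\<O>" n] by blast
  qed
  ultimately show "M n (\<Union>\<O>) = pc (\<Union>\<O>) (\<Union>V\<in>\<O>. M n V)" by (rule subset_antisym)
qed

lemma proj_cont: "i < n \<Longrightarrow> continuous_map (cube n) (top_of_set {0..1}) (\<lambda>t. t i)"
  unfolding cube_def by (rule continuous_map_product_projection) simp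

lemma M_proj: assumes "i < n" shows "stream_map (cube n, M n) dI (\<lambda>t. t i)"
  unfolding stream_map_def
proof (intro conjI allI impI)
  show "continuous_map (fst (cube n, M n)) (fst dI) (\<lambda>t. t i)"
    using proj_cont[OF assms] by (simp add: dI_def)
  fix V x y
  assume V: "openin (fst dI) V"
  define P where "P = {z \<in> topspace (fst (cube n, M n)). z i \<in> V}"
  assume xy: "(x, y) \<in> snd (cube n, M n) {z \<in> topspace (fst (cube n, M n)). z i \<in> V}"
  define R where "R = {(x,y). x \<in> P \<and> y \<in> P \<and> x i \<le> y i \<and> {x i..y i} \<subseteq> V}"
  have "M n P \<subseteq> R" unfolding M_def
  proof (rule pc_least)
    show "preorder_on P R"
    proof (rule preorder_onI)
      show "R \<subseteq> P \<times> P" unfolding R_def by blast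
      fix x assume "x \<in> P"
      then show "(x,x) \<in> R" unfolding R_def P_def by auto
    next
      fix x y z assume "(x,y) \<in> R" "(y,z) \<in> R"
      then show "(x,z) \<in> R" unfolding R_def
        by (auto simp: subset_iff) (meson order_trans linorder_le_cases)+
    qed
    show "Sst n P \<subseteq> R"
    proof
      fix ab assume "ab \<in> Sst n P"
      then obtain a b where ab: "ab = (a,b)" "a \<in> P" "b \<in> P" "lec n a b"
        and segP: "\<And>\<tau>. \<tau> \<in> {0..1} \<Longrightarrow> seg a b \<tau> \<in> P"
        unfolding Sst_def by auto
      have le: "a i \<le> b i" using ab(4) assms unfolding lec_def by auto
      have "{a i..b i} \<subseteq> V"
      proof
        fix c assume c: "c \<in> {a i..b i}"
        show "c \<in> V"
        proof (cases "a i = b i")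
          case True
          then have "c = a i" using c by auto
          then show ?thesis using ab(2) unfolding P_def by auto
        next
          case False
          then have lt: "a i < b i" using le by auto
          define \<tau> where "\<tau> = (c - a i) / (b i - a i)"
          have "\<tau> \<in> {0..1}" using c lt unfolding \<tau>_def by (auto simp: field_simps)
          moreover have "seg a b \<tau> i = c" using lt unfolding seg_def \<tau>_def by (simp add: field_simps)
          ultimately show ?thesis using segP unfolding P_def by force
        qed
      qed
      then show "ab \<in> R" unfolding R_def using ab le by auto
    qed
  qed
  then show "((\<lambda>t. t i) x, (\<lambda>t. t i) y) \<in> snd dI V"
    using xy unfolding P_def[symmetric] R_def dI_def by auto
qed

lemma PiE_open_cube:
  assumes "\<And>i. i < n \<Longrightarrow> openin (top_of_set {0..1}) (U i)"
  shows "openin (cube n) (PiE {..<n} U)"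
  unfolding cube_def openin_product_topology_alt
proof
  fix x assume "x \<in> PiE {..<n} U"
  then show "\<exists>Ua. finite {i \<in> {..<n}. Ua i \<noteq> topspace (top_of_set {0..1})} \<and>
      (\<forall>i\<in>{..<n}. openin (top_of_set {0..1}) (Ua i)) \<and> x \<in> PiE {..<n} Ua \<and> PiE {..<n} Ua \<subseteq> PiE {..<n} U"
    using assms by (intro exI[of _ U]) auto
qed

lemma M_largest:
  assumes C: "is_circulation (cube n) C" and proj: "\<forall>i<n. stream_map (cube n, C) dI (\<lambda>t. t i)"
    and V: "openin (cube n) V"
  shows "C V \<subseteq> M n V"
proof -
  have "\<forall>z\<in>V. \<exists>U. (\<forall>i\<in>{..<n}. openin (top_of_set {0..1}) (U i)) \<and> z \<in> PiE {..<n} U \<and> PiE {..<n} U \<subseteq> V"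
    using V unfolding cube_def openin_product_topology_alt by metis
  then obtain U where U: "\<And>z. z \<in> V \<Longrightarrow> (\<forall>i\<in>{..<n}. openin (top_of_set {0..1}) (U z i)) \<and> z \<in> PiE {..<n} (U z) \<and> PiE {..<n} (U z) \<subseteq> V"
    by metis
  define \<O> where "\<O> = (\<lambda>z. PiE {..<n} (U z)) ` V"
  have opens: "\<And>W. W \<in> \<O> \<Longrightarrow> openin (cube n) W"
    unfolding \<O>_def using U PiE_open_cube by blast
  have UO: "\<Union>\<O> = V" unfolding \<O>_def using U by blast
  have "C V = pc V (\<Union>W\<in>\<O>. C W)"
    using circ_union[OF C, of \<O>] opens UO by simp
  also have "\<dots> \<subseteq> M n V"
  proof (rule pc_least[OF M_preorder])
    show "(\<Union>W\<in>\<O>. C W) \<subseteq> M n V"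
    proof
      fix ab assume "ab \<in> (\<Union>W\<in>\<O>. C W)"
      then obtain z a b where z: "z \<in> V" and ab: "ab = (a,b)" "(a,b) \<in> C (PiE {..<n} (U z))"
        unfolding \<O>_def by (metis (no_types, lifting) UN_E image_iff prod.exhaust)
      define W where "W = PiE {..<n} (U z)"
      have Wo: "openin (cube n) W" unfolding W_def using U[OF z] PiE_open_cube by blast
      have abW: "a \<in> W" "b \<in> W"
        using preorder_onD1[OF circ_preorder[OF C Wo]] ab(2) unfolding W_def by auto
      have WV: "W \<subseteq> V" unfolding W_def using U[OF z] by blast
      have coord: "a i \<le> b i \<and> {a i..b i} \<subseteq> U z i" if "i < n" for i
      proof -
        define P where "P = {w \<in> topspace (cube n). w i \<in> U z i}"
        have Po: "openin (cube n) P" unfolding P_def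
          by (rule openin_continuous_map_preimage[OF proj_cont[OF that]]) (use U[OF z] that in auto)
        have "W \<subseteq> P" unfolding P_def using openin_subset[OF Wo] that unfolding W_def by auto
        then have "(a,b) \<in> C P" using circ_mono[OF C Wo Po] ab(2) unfolding W_def by blast
        then have "((\<lambda>t. t i) a, (\<lambda>t. t i) b) \<in> snd dI (U z i)"
          using proj that U[OF z] unfolding stream_map_def P_def by (auto simp: dI_def)
        then show ?thesis by (simp add: dI_def)
      qed
      have "(a,b) \<in> Sst n V"
        unfolding Sst_def
      proof (intro CollectI case_prodI conjI ballI)
        show "a \<in> V" "b \<in> V" using abW WV by auto
        show "lec n a b" unfolding lec_def using coord by auto
        fix \<tau> :: real assume \<tau>: "\<tau> \<in> {0..1}"
        have "seg a b \<tau> \<in> W" unfolding W_def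
        proof (rule PiE_I)
          fix i assume "i \<in> {..<n}"
          then have c: "a i \<le> b i" "{a i..b i} \<subseteq> U z i" using coord by auto
          have "0 \<le> \<tau> * (b i - a i)" using \<tau> c by auto
          moreover have "\<tau> * (b i - a i) \<le> 1 * (b i - a i)" using \<tau> c by (intro mult_right_mono) auto
          ultimately have "seg a b \<tau> i \<in> {a i..b i}" unfolding seg_def by auto
          then show "seg a b \<tau> i \<in> U z i" using c by blast
        next
          fix i assume "i \<notin> {..<n}"
          then have "a i = undefined" "b i = undefined" using abW unfolding W_def by (metis PiE_arb)+
          then show "seg a b \<tau> i = undefined" unfolding seg_def by simp
        qed
        then show "seg a b \<tau> \<in> V" using WV by blast
      qed
      then show "ab \<in> M n V" using ab(1) pc_gen[of "Sst n V" V] unfolding M_def by blast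
    qed
  qed
  finally show ?thesis .
qed

lemma dcube_prop:
  "is_circulation (cube n) (dcube_circ n) \<and> (\<forall>i<n. stream_map (cube n, dcube_circ n) dI (\<lambda>t. t i)) \<and>
      (\<forall>C'. is_circulation (cube n) C' \<and> (\<forall>i<n. stream_map (cube n, C') dI (\<lambda>t. t i)) \<longrightarrow>
           (\<forall>V. openin (cube n) V \<longrightarrow> C' V \<subseteq> dcube_circ n V))"
  unfolding dcube_circ_def
  by (rule someI[of _ "M n"]) (use M_circ M_proj M_largest in blast)

lemma dcube_circ: "is_circulation (cube n) (dcube_circ n)"
  using dcube_prop by blast

lemma dcube_sub_M: "openin (cube n) V \<Longrightarrow> dcube_circ n V \<subseteq> M n V"
  using M_largest dcube_prop by blast


fun cnt :: "bool list \<Rightarrow> nat" where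
  "cnt [] = 0"
| "cnt (b # l) = (if b then 1 else 0) + cnt l"

lemma cnt_append: "cnt (xs @ ys) = cnt xs + cnt ys"
  by (induction xs) auto

lemma cnt_sum: "(\<Sum>i<length l. if l ! i then 1 else 0 :: real) = real (cnt l)"
proof (induction l)
  case (Cons b l)
  show ?case unfolding length_Cons sum.lessThan_Suc_shift using Cons by simp
qed simp

lemma box_mor_cnt:
  "(a, b, f) \<in> box_mor \<Longrightarrow> \<exists>c. \<forall>v. length v = a \<longrightarrow> length (f v) = b \<and> cnt (f v) = cnt v + c"
proof (induction rule: box_mor.induct)
  case id0 then show ?case by (intro exI[of _ 0]) (simp add: restr_def)
next
  case id1 then show ?case by (intro exI[of _ 0]) (simp add: restr_def)
next
  case delta_minus then show ?case by (intro exI[of _ 0]) (simp add: restr_def)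
next
  case delta_plus then show ?case by (intro exI[of _ 1]) (simp add: restr_def)
next
  case (prod a b f c d g)
  then obtain c1 c2 where c1: "\<forall>v. length v = a \<longrightarrow> length (f v) = b \<and> cnt (f v) = cnt v + c1"
    and c2: "\<forall>v. length v = c \<longrightarrow> length (g v) = d \<and> cnt (g v) = cnt v + c2" by blast
  show ?case
  proof (intro exI[of _ "c1 + c2"] allI impI)
    fix v :: "bool list" assume v: "length v = a + c"
    then have l: "length (take a v) = a" "length (drop a v) = c" by auto
    have "cnt v = cnt (take a v) + cnt (drop a v)"
      using cnt_append[of "take a v" "drop a v"] by simp
    then show "length (restr (a + c) (\<lambda>v. f (take a v) @ g (drop a v)) v) = b + d \<and>
          cnt (restr (a + c) (\<lambda>v. f (take a v) @ g (drop a v)) v) = cnt v + (c1 + c2)"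
      using c1[rule_format, OF l(1)] c2[rule_format, OF l(2)] v
      by (simp add: restr_def cnt_append)
  qed
next
  case (comp a b f c g)
  then obtain c1 c2 where c1: "\<forall>v. length v = a \<longrightarrow> length (f v) = b \<and> cnt (f v) = cnt v + c1"
    and c2: "\<forall>v. length v = b \<longrightarrow> length (g v) = c \<and> cnt (g v) = cnt v + c2" by blast
  show ?case
  proof (intro exI[of _ "c1 + c2"] allI impI)
    fix v :: "bool list" assume v: "length v = a"
    show "length (restr a (\<lambda>v. g (f v)) v) = c \<and> cnt (restr a (\<lambda>v. g (f v)) v) = cnt v + (c1 + c2)"
      using c1[rule_format, OF v] c2[rule_format, of "f v"] v by (simp add: restr_def)
  qed
qed

definition wt :: "nat \<Rightarrow> (nat \<Rightarrow> real) \<Rightarrow> bool list \<Rightarrow> real" where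
  "wt m t v = (\<Prod>j<m. if v ! j then t j else 1 - t j)"

lemma wt_Suc: "wt (Suc m) t (b # v) = (if b then t 0 else 1 - t 0) * wt m (\<lambda>j. t (Suc j)) v"
  unfolding wt_def prod.lessThan_Suc_shift by simp

lemma finite_lists: "finite {v :: bool list. length v = m}"
  using finite_lists_length_eq[of "UNIV :: bool set" m] by simp

lemma lists_Suc: "{v :: bool list. length v = Suc m} = Cons True ` {v. length v = m} \<union> Cons False ` {v. length v = m}"
proof
  show "{v :: bool list. length v = Suc m} \<subseteq> Cons True ` {v. length v = m} \<union> Cons False ` {v. length v = m}"
  proof
    fix v :: "bool list" assume "v \<in> {v. length v = Suc m}"
    then obtain b w where "v = b # w" "length w = m" by (auto simp: length_Suc_conv)
    then show "v \<in> Cons True ` {v. length v = m} \<union> Cons False ` {v. length v = m}" by (cases b) auto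
  qed
qed auto

lemma sum_lists_Suc:
  "(\<Sum>v\<in>{v :: bool list. length v = Suc m}. f v) = (\<Sum>v\<in>{v. length v = m}. f (True # v) + f (False # v))"
proof -
  have "(\<Sum>v\<in>{v :: bool list. length v = Suc m}. f v) =
        (\<Sum>v\<in>Cons True ` {v. length v = m}. f v) + (\<Sum>v\<in>Cons False ` {v. length v = m}. f v)"
    unfolding lists_Suc by (rule sum.union_disjoint) (auto intro: finite_lists)
  also have "\<dots> = (\<Sum>v\<in>{v. length v = m}. f (True # v)) + (\<Sum>v\<in>{v. length v = m}. f (False # v))"
    by (simp add: sum.reindex)
  finally show ?thesis by (simp add: sum.distrib)
qed

lemma wsum: "(\<Sum>v\<in>{v. length v = m}. wt m t v) = 1"
proof (induction m arbitrary: t)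
  case 0
  have "{v :: bool list. length v = 0} = {[]}" by auto
  then show ?case by (simp add: wt_def)
next
  case (Suc m)
  have "(\<Sum>v\<in>{v. length v = Suc m}. wt (Suc m) t v) =
        (\<Sum>v\<in>{v. length v = m}. t 0 * wt m (\<lambda>j. t (Suc j)) v + (1 - t 0) * wt m (\<lambda>j. t (Suc j)) v)"
    unfolding sum_lists_Suc by (simp add: wt_Suc)
  also have "\<dots> = (\<Sum>v\<in>{v. length v = m}. wt m (\<lambda>j. t (Suc j)) v)"
    by (simp add: algebra_simps)
  finally show ?case using Suc.IH by simp
qed

lemma wcnt: "(\<Sum>v\<in>{v. length v = m}. wt m t v * real (cnt v)) = (\<Sum>j<m. t j)"
proof (induction m arbitrary: t)
  case 0
  have "{v :: bool list. length v = 0} = {[]}" by auto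
  then show ?case by (simp add: wt_def)
next
  case (Suc m)
  define t' where "t' = (\<lambda>j. t (Suc j))"
  have "(\<Sum>v\<in>{v. length v = Suc m}. wt (Suc m) t v * real (cnt v)) =
        (\<Sum>v\<in>{v. length v = m}. t 0 * wt m t' v + wt m t' v * real (cnt v))"
    unfolding sum_lists_Suc by (simp add: wt_Suc t'_def algebra_simps)
  also have "\<dots> = t 0 * (\<Sum>v\<in>{v. length v = m}. wt m t' v) + (\<Sum>v\<in>{v. length v = m}. wt m t' v * real (cnt v))"
    by (simp add: sum.distrib sum_distrib_left)
  also have "\<dots> = t 0 + (\<Sum>j<m. t' j)" using Suc.IH wsum by simp
  finally show ?case unfolding sum.lessThan_Suc_shift t'_def .
qed

lemma wt_nonneg: "(\<And>j. j < m \<Longrightarrow> t j \<in> {0..1}) \<Longrightarrow> 0 \<le> wt m t v"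
  unfolding wt_def by (intro prod_nonneg) auto

lemma lin_ext_alt: "i < n \<Longrightarrow> lin_ext m n f t i = (\<Sum>v\<in>{v. length v = m}. wt m t v * (if f v ! i then 1 else 0))"
  unfolding lin_ext_def wt_def by simp

lemma sum_lin_ext:
  assumes "(m, n, f) \<in> box_mor"
  obtains c :: nat where "\<And>t. (\<Sum>i<n. lin_ext m n f t i) = (\<Sum>j<m. t j) + real c"
proof -
  obtain c where c: "\<forall>v. length v = m \<longrightarrow> length (f v) = n \<and> cnt (f v) = cnt v + c"
    using box_mor_cnt[OF assms] by blast
  have "(\<Sum>i<n. lin_ext m n f t i) = (\<Sum>j<m. t j) + real c" for t
  proof -
    have "(\<Sum>i<n. lin_ext m n f t i) = (\<Sum>i<n. \<Sum>v\<in>{v. length v = m}. wt m t v * (if f v ! i then 1 else 0))"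
      by (simp add: lin_ext_alt)
    also have "\<dots> = (\<Sum>v\<in>{v. length v = m}. wt m t v * (\<Sum>i<n. if f v ! i then 1 else 0))"
      by (subst sum.swap) (simp add: sum_distrib_left)
    also have "\<dots> = (\<Sum>v\<in>{v. length v = m}. wt m t v * (real (cnt v) + real c))"
    proof (rule sum.cong)
      fix v assume "v \<in> {v :: bool list. length v = m}"
      then have "length (f v) = n" "cnt (f v) = cnt v + c" using c by auto
      then show "wt m t v * (\<Sum>i<n. if f v ! i then 1 else 0) = wt m t v * (real (cnt v) + real c)"
        using cnt_sum[of "f v"] by simp
    qed simp
    also have "\<dots> = (\<Sum>v\<in>{v. length v = m}. wt m t v * real (cnt v)) + real c * (\<Sum>v\<in>{v. length v = m}. wt m t v)"
      by (simp add: algebra_simps sum.distrib sum_distrib_left)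
    also have "\<dots> = (\<Sum>j<m. t j) + real c" using wcnt wsum by simp
    finally show ?thesis .
  qed
  then show ?thesis using that by blast
qed

lemma lin_ext_cube:
  assumes "t \<in> topspace (cube m)"
  shows "lin_ext m n f t \<in> topspace (cube n)"
  unfolding topspace_cube
proof (rule PiE_I)
  fix i assume i: "i \<in> {..<n}"
  have t01: "\<And>j. j < m \<Longrightarrow> t j \<in> {0..1}" using assms by (auto simp: topspace_cube PiE_iff)
  have "0 \<le> lin_ext m n f t i" using i
    by (simp add: lin_ext_alt) (intro sum_nonneg mult_nonneg_nonneg wt_nonneg[OF t01]; simp)
  moreover have "lin_ext m n f t i \<le> (\<Sum>v\<in>{v. length v = m}. wt m t v)" using i
    by (simp add: lin_ext_alt) (intro sum_mono; simp add: wt_nonneg[OF t01])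
  ultimately show "lin_ext m n f t i \<in> {0..1}" using wsum by simp
next
  fix i assume "i \<notin> {..<n}" then show "lin_ext m n f t i = undefined" by (simp add: lin_ext_def)
qed


locale pcs =
  fixes B :: "'c precubical"
  assumes pre: "precubical_set B"
begin

abbreviation "quot \<equiv> cells B // coend_rel B"

lemma act_in: "(m, n, f) \<in> box_mor \<Longrightarrow> x \<in> fst B n \<Longrightarrow> snd B m n f x \<in> fst B m"
  using pre unfolding precubical_set_def by blast

lemma gen_cells: "coend_gen B \<subseteq> cells B \<times> cells B"
proof
  fix p assume "p \<in> coend_gen B"
  then obtain m n f x t where p: "p = ((m, snd B m n f x, t), (n, x, lin_ext m n f t))"
    and mor: "(m, n, f) \<in> box_mor" and x: "x \<in> fst B n" and t: "t \<in> topspace (cube m)"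
    unfolding coend_gen_def by blast
  show "p \<in> cells B \<times> cells B"
    unfolding p cells_def using act_in[OF mor x] x t lin_ext_cube[OF t] by auto
qed

lemma equiv_Inter:
  assumes "F \<noteq> {}" "\<And>R. R \<in> F \<Longrightarrow> equiv A R"
  shows "equiv A (\<Inter>F)"
proof (rule equivI)
  obtain R0 where "R0 \<in> F" using assms(1) by blast
  then show "\<Inter>F \<subseteq> A \<times> A" using assms(2)[of R0] unfolding equiv_def by blast
  show "refl_on A (\<Inter>F)" using assms(2) unfolding equiv_def refl_on_def by blast
  show "sym (\<Inter>F)" unfolding sym_def using assms(2) unfolding equiv_def sym_def by blast
  show "trans (\<Inter>F)" unfolding trans_def using assms(2) unfolding equiv_def trans_def by blast
qed

lemma equiv_rel: "equiv (cells B) (coend_rel B)"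
  unfolding coend_rel_def
proof (rule equiv_Inter)
  have "equiv (cells B) (cells B \<times> cells B)"
    by (rule equivI) (auto simp: refl_on_def sym_def trans_def)
  then show "{R. equiv (cells B) R \<and> coend_gen B \<subseteq> R} \<noteq> {}" using gen_cells by blast
qed blast

lemma gen_rel: "coend_gen B \<subseteq> coend_rel B"
  unfolding coend_rel_def by blast

lemma rel_least: "equiv (cells B) R \<Longrightarrow> coend_gen B \<subseteq> R \<Longrightarrow> coend_rel B \<subseteq> R"
  unfolding coend_rel_def by blast

lemma real_pt_quot: "x \<in> fst B n \<Longrightarrow> t \<in> topspace (cube n) \<Longrightarrow> real_pt B n x t \<in> quot"
  unfolding real_pt_def by (rule quotientI) (simp add: cells_def)

lemma quot_cases:
  assumes "P \<in> quot"
  obtains n x t where "x \<in> fst B n" "t \<in> topspace (cube n)" "P = real_pt B n x t"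
  using assms unfolding real_pt_def cells_def quotient_def by blast

lemma openin_real_top:
  "openin (real_top B) U \<longleftrightarrow> U \<subseteq> quot \<and>
     (\<forall>n. \<forall>x\<in>fst B n. openin (cube n) {t \<in> topspace (cube n). real_pt B n x t \<in> U})"
proof -
  have "istopology (\<lambda>U. U \<subseteq> quot \<and>
     (\<forall>n. \<forall>x\<in>fst B n. openin (cube n) {t \<in> topspace (cube n). real_pt B n x t \<in> U}))"
    unfolding istopology_def
  proof (rule conjI; intro allI impI)
    fix S T
    assume S: "S \<subseteq> quot \<and> (\<forall>n. \<forall>x\<in>fst B n. openin (cube n) {t \<in> topspace (cube n). real_pt B n x t \<in> S})"
      and T: "T \<subseteq> quot \<and> (\<forall>n. \<forall>x\<in>fst B n. openin (cube n) {t \<in> topspace (cube n). real_pt B n x t \<in> T})"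
    show "S \<inter> T \<subseteq> quot \<and> (\<forall>n. \<forall>x\<in>fst B n. openin (cube n) {t \<in> topspace (cube n). real_pt B n x t \<in> S \<inter> T})"
    proof (intro conjI allI ballI)
      show "S \<inter> T \<subseteq> quot" using S by blast
      fix n x assume "x \<in> fst B n"
      have "{t \<in> topspace (cube n). real_pt B n x t \<in> S \<inter> T} =
          {t \<in> topspace (cube n). real_pt B n x t \<in> S} \<inter> {t \<in> topspace (cube n). real_pt B n x t \<in> T}" by blast
      then show "openin (cube n) {t \<in> topspace (cube n). real_pt B n x t \<in> S \<inter> T}"
        using S T \<open>x \<in> fst B n\<close> by (simp add: openin_Int)
    qed
  next
    fix K assume K: "\<forall>S\<in>K. S \<subseteq> quot \<and> (\<forall>n. \<forall>x\<in>fst B n. openin (cube n) {t \<in> topspace (cube n). real_pt B n x t \<in> S})"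
    show "\<Union>K \<subseteq> quot \<and> (\<forall>n. \<forall>x\<in>fst B n. openin (cube n) {t \<in> topspace (cube n). real_pt B n x t \<in> \<Union>K})"
    proof (intro conjI allI ballI)
      show "\<Union>K \<subseteq> quot" using K by blast
      fix n x assume "x \<in> fst B n"
      have "{t \<in> topspace (cube n). real_pt B n x t \<in> \<Union>K} =
          \<Union>((\<lambda>S. {t \<in> topspace (cube n). real_pt B n x t \<in> S}) ` K)" by blast
      then show "openin (cube n) {t \<in> topspace (cube n). real_pt B n x t \<in> \<Union>K}"
        using K \<open>x \<in> fst B n\<close> by (auto intro!: openin_Union)
    qed
  qed
  then show ?thesis unfolding real_top_def by simp
qed

lemma topspace_real_top: "topspace (real_top B) = quot"
proof
  show "topspace (real_top B) \<subseteq> quot"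
    unfolding topspace_def using openin_real_top by blast
  have "openin (real_top B) quot"
    unfolding openin_real_top
  proof (intro conjI allI ballI)
    fix n x assume "x \<in> fst B n"
    then have "{t \<in> topspace (cube n). real_pt B n x t \<in> quot} = topspace (cube n)"
      using real_pt_quot by blast
    then show "openin (cube n) {t \<in> topspace (cube n). real_pt B n x t \<in> quot}" by simp
  qed simp
  then show "quot \<subseteq> topspace (real_top B)" by (rule openin_subset)
qed

lemma real_pt_cont: "x \<in> fst B n \<Longrightarrow> continuous_map (cube n) (real_top B) (real_pt B n x)"
  unfolding continuous_map_def topspace_real_top
  using real_pt_quot by (auto simp: openin_real_top)

lemma cont_real_top:
  assumes "\<And>n x. x \<in> fst B n \<Longrightarrow> continuous_map (cube n) Y (\<lambda>t. h (real_pt B n x t))"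
  shows "continuous_map (real_top B) Y h"
  unfolding continuous_map_def
proof (intro conjI allI impI)
  show "h \<in> topspace (real_top B) \<rightarrow> topspace Y"
  proof
    fix P assume "P \<in> topspace (real_top B)"
    then obtain n x t where "x \<in> fst B n" "t \<in> topspace (cube n)" "P = real_pt B n x t"
      unfolding topspace_real_top by (rule quot_cases)
    then show "h P \<in> topspace Y" using assms[of x n] unfolding continuous_map_def by blast
  qed
  fix U assume U: "openin Y U"
  show "openin (real_top B) {P \<in> topspace (real_top B). h P \<in> U}"
    unfolding openin_real_top topspace_real_top
  proof (intro conjI allI ballI)
    show "{P \<in> quot. h P \<in> U} \<subseteq> quot" by blast
    fix n x assume x: "x \<in> fst B n"
    have "{t \<in> topspace (cube n). real_pt B n x t \<in> {P \<in> quot. h P \<in> U}} =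
          {t \<in> topspace (cube n). h (real_pt B n x t) \<in> U}"
      using real_pt_quot[OF x] by blast
    then show "openin (cube n) {t \<in> topspace (cube n). real_pt B n x t \<in> {P \<in> quot. h P \<in> U}}"
      using openin_continuous_map_preimage[OF assms[OF x] U] by simp
  qed
qed

end


lemma pc_mono:
  assumes "G \<subseteq> S \<times> S" "G' \<subseteq> S' \<times> S'" "S \<subseteq> S'" "G \<subseteq> G'"
  shows "pc S G \<subseteq> pc S' G'"
proof -
  have "pc S G \<subseteq> pc S' G' \<inter> S \<times> S"
  proof (rule pc_least)
    show "preorder_on S (pc S' G' \<inter> S \<times> S)"
    proof (rule preorder_onI)
      show "pc S' G' \<inter> S \<times> S \<subseteq> S \<times> S" by blast
      fix x assume "x \<in> S"
      then have "(x,x) \<in> pc S' G'" using preorder_onD2[OF pc_preorder[OF assms(2)]] assms(3) by blast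
      then show "(x,x) \<in> pc S' G' \<inter> S \<times> S" using \<open>x \<in> S\<close> by blast
    next
      fix x y z assume "(x,y) \<in> pc S' G' \<inter> S \<times> S" "(y,z) \<in> pc S' G' \<inter> S \<times> S"
      then show "(x,z) \<in> pc S' G' \<inter> S \<times> S"
        using preorder_onD3[OF pc_preorder[OF assms(2)]] by blast
    qed
    show "G \<subseteq> pc S' G' \<inter> S \<times> S" using assms(1,4) pc_gen[of G' S'] by blast
  qed
  then show ?thesis by blast
qed

definition G0 :: "nat \<Rightarrow> (nat \<Rightarrow> real) \<Rightarrow> complex" where
  "G0 n t = exp (\<i> * of_real (2 * pi * (\<Sum>i<n. t i)))"

lemma G0_gen:
  assumes "(m, n, f) \<in> box_mor"
  shows "G0 n (lin_ext m n f t) = G0 m t"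
proof -
  obtain c :: nat where c: "\<And>t. (\<Sum>i<n. lin_ext m n f t i) = (\<Sum>j<m. t j) + real c"
    using sum_lin_ext[OF assms] by blast
  have "\<i> * of_real (2 * pi * ((\<Sum>j<m. t j) + real c)) =
        \<i> * of_real (2 * pi * (\<Sum>j<m. t j)) + of_nat c * (2 * of_real pi * \<i>)"
    by (simp add: algebra_simps)
  then show ?thesis unfolding G0_def c
    by (simp only: exp_add exp_of_nat_mult exp_two_pi_i power_one mult_1_right)
qed

lemma G0_cont: "continuous_map (cube n) euclidean (G0 n)"
proof -
  have s: "continuous_map (cube n) euclideanreal (\<lambda>t. \<Sum>i<n. t i)"
  proof (intro continuous_map_sum)
    fix i assume "i \<in> {..<n}"
    then show "continuous_map (cube n) euclideanreal (\<lambda>t. t i)"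
      using proj_cont[of i n] unfolding continuous_map_in_subtopology by simp
  qed simp
  have e: "continuous_map euclideanreal euclidean (\<lambda>r. exp (\<i> * of_real (2 * pi * r)))"
    unfolding continuous_map_iff_continuous2 by (intro continuous_intros)
  show ?thesis using continuous_map_compose[OF s e] unfolding G0_def o_def .
qed

definition GenR :: "'c precubical \<Rightarrow> 'c rpt set \<Rightarrow> ('c rpt \<times> 'c rpt) set" where
  "GenR B U = {(real_pt B n x s, real_pt B n x t) | n x s t. x \<in> fst B n \<and>
      (s,t) \<in> dcube_circ n {z \<in> topspace (cube n). real_pt B n x z \<in> U}}"

definition Cf :: "'c precubical \<Rightarrow> 'c rpt set \<Rightarrow> ('c rpt \<times> 'c rpt) set" where
  "Cf B U = pc U (GenR B U)"

context pcs begin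

definition Grel where
  "Grel = {(a,b). a \<in> cells B \<and> b \<in> cells B \<and> G0 (fst a) (snd (snd a)) = G0 (fst b) (snd (snd b))}"

lemma rel_G0: "(a,b) \<in> coend_rel B \<Longrightarrow> G0 (fst a) (snd (snd a)) = G0 (fst b) (snd (snd b))"
proof -
  have "equiv (cells B) Grel"
    by (rule equivI) (auto simp: Grel_def refl_on_def sym_def trans_def)
  moreover have "coend_gen B \<subseteq> Grel"
  proof
    fix p assume p: "p \<in> coend_gen B"
    then have "p \<in> cells B \<times> cells B" using gen_cells by blast
    moreover from p obtain m n f x t where "p = ((m, snd B m n f x, t), (n, x, lin_ext m n f t))"
      and "(m, n, f) \<in> box_mor" unfolding coend_gen_def by blast
    ultimately show "p \<in> Grel" unfolding Grel_def using G0_gen by auto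
  qed
  ultimately have "coend_rel B \<subseteq> Grel" by (rule rel_least)
  then show "(a,b) \<in> coend_rel B \<Longrightarrow> G0 (fst a) (snd (snd a)) = G0 (fst b) (snd (snd b))"
    unfolding Grel_def by blast
qed

definition Gf :: "'c rpt \<Rightarrow> complex" where
  "Gf P = G0 (fst (SOME a. a \<in> P)) (snd (snd (SOME a. a \<in> P)))"

lemma Gf_pt:
  assumes "x \<in> fst B n" "t \<in> topspace (cube n)"
  shows "Gf (real_pt B n x t) = G0 n t"
proof -
  have "(n,x,t) \<in> real_pt B n x t" unfolding real_pt_def
    by (rule equiv_class_self[OF equiv_rel]) (use assms in \<open>simp add: cells_def\<close>)
  then have "(SOME a. a \<in> real_pt B n x t) \<in> real_pt B n x t" by (rule someI)
  then have "((n,x,t), SOME a. a \<in> real_pt B n x t) \<in> coend_rel B" unfolding real_pt_def by simp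
  from rel_G0[OF this] show ?thesis unfolding Gf_def by simp
qed

lemma Gf_cont: "continuous_map (real_top B) euclidean Gf"
proof (rule cont_real_top)
  fix n x assume x: "x \<in> fst B n"
  show "continuous_map (cube n) euclidean (\<lambda>t. Gf (real_pt B n x t))"
    by (rule continuous_map_eq[OF G0_cont]) (simp add: Gf_pt[OF x])
qed

lemma norm_Gf: "P \<in> quot \<Longrightarrow> norm (Gf P) = 1"
  by (erule quot_cases) (simp add: Gf_pt G0_def)

lemma pre_open: "openin (real_top B) U \<Longrightarrow> x \<in> fst B n \<Longrightarrow>
    openin (cube n) {z \<in> topspace (cube n). real_pt B n x z \<in> U}"
  unfolding openin_real_top by blast

lemma GenR_I:
  assumes "x \<in> fst B n" "(s,t) \<in> dcube_circ n {z \<in> topspace (cube n). real_pt B n x z \<in> U}"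
  shows "(real_pt B n x s, real_pt B n x t) \<in> GenR B U"
  unfolding GenR_def
  by (rule CollectI, rule exI[of _ n], rule exI[of _ x], rule exI[of _ s], rule exI[of _ t]) (use assms in simp)

lemma GenR_sub: "openin (real_top B) U \<Longrightarrow> GenR B U \<subseteq> U \<times> U"
proof
  fix p assume U: "openin (real_top B) U" and "p \<in> GenR B U"
  then obtain n x s t where p: "p = (real_pt B n x s, real_pt B n x t)" "x \<in> fst B n"
    "(s,t) \<in> dcube_circ n {z \<in> topspace (cube n). real_pt B n x z \<in> U}"
    unfolding GenR_def by blast
  have "(s,t) \<in> {z \<in> topspace (cube n). real_pt B n x z \<in> U} \<times> {z \<in> topspace (cube n). real_pt B n x z \<in> U}"
    using preorder_onD1[OF circ_preorder[OF dcube_circ pre_open[OF U p(2)]]] p(3) by blast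
  then show "p \<in> U \<times> U" using p(1) by auto
qed

lemma GenR_mono:
  assumes "openin (real_top B) U" "openin (real_top B) W" "U \<subseteq> W"
  shows "GenR B U \<subseteq> GenR B W"
proof
  fix p assume "p \<in> GenR B U"
  then obtain n x s t where p: "p = (real_pt B n x s, real_pt B n x t)" "x \<in> fst B n"
    "(s,t) \<in> dcube_circ n {z \<in> topspace (cube n). real_pt B n x z \<in> U}"
    unfolding GenR_def by blast
  have "dcube_circ n {z \<in> topspace (cube n). real_pt B n x z \<in> U} \<subseteq> dcube_circ n {z \<in> topspace (cube n). real_pt B n x z \<in> W}"
    by (rule circ_mono[OF dcube_circ pre_open[OF assms(1) p(2)] pre_open[OF assms(2) p(2)]]) (use assms(3) in blast)
  then show "p \<in> GenR B W" using p unfolding GenR_def by blast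
qed

lemma Cf_preorder: "openin (real_top B) U \<Longrightarrow> preorder_on U (Cf B U)"
  unfolding Cf_def by (rule pc_preorder[OF GenR_sub])

lemma Cf_mono: "openin (real_top B) U \<Longrightarrow> openin (real_top B) W \<Longrightarrow> U \<subseteq> W \<Longrightarrow> Cf B U \<subseteq> Cf B W"
  unfolding Cf_def by (rule pc_mono[OF GenR_sub GenR_sub _ GenR_mono])

lemma Cf_circ: "is_circulation (real_top B) (Cf B)"
  unfolding is_circulation_iff
proof (intro conjI allI impI)
  fix V assume "openin (real_top B) V" then show "preorder_on V (Cf B V)" by (rule Cf_preorder)
next
  fix \<O> assume opens: "\<forall>V\<in>\<O>. openin (real_top B) V"
  have Uo: "openin (real_top B) (\<Union>\<O>)" using opens by (intro openin_Union) blast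
  have gsub: "(\<Union>V\<in>\<O>. Cf B V) \<subseteq> \<Union>\<O> \<times> \<Union>\<O>"
  proof
    fix p assume "p \<in> (\<Union>V\<in>\<O>. Cf B V)"
    then obtain V where "V \<in> \<O>" "p \<in> Cf B V" by blast
    then have "p \<in> V \<times> V" using preorder_onD1[OF Cf_preorder, of V] opens by blast
    then show "p \<in> \<Union>\<O> \<times> \<Union>\<O>" using \<open>V \<in> \<O>\<close> by blast
  qed
  have "Cf B (\<Union>\<O>) \<subseteq> pc (\<Union>\<O>) (\<Union>V\<in>\<O>. Cf B V)"
    unfolding Cf_def[of B "\<Union>\<O>"]
  proof (rule pc_least[OF pc_preorder[OF gsub]])
    show "GenR B (\<Union>\<O>) \<subseteq> pc (\<Union>\<O>) (\<Union>V\<in>\<O>. Cf B V)"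
    proof
      fix p assume "p \<in> GenR B (\<Union>\<O>)"
      then obtain n x s t where p: "p = (real_pt B n x s, real_pt B n x t)" "x \<in> fst B n"
        "(s,t) \<in> dcube_circ n {z \<in> topspace (cube n). real_pt B n x z \<in> \<Union>\<O>}"
        unfolding GenR_def by blast
      define R where "R = pc (\<Union>\<O>) (\<Union>V\<in>\<O>. Cf B V)"
      have R: "preorder_on (\<Union>\<O>) R" unfolding R_def by (rule pc_preorder[OF gsub])
      define PV where "PV = (\<lambda>V. {z \<in> topspace (cube n). real_pt B n x z \<in> V})"
      have PU: "{z \<in> topspace (cube n). real_pt B n x z \<in> \<Union>\<O>} = \<Union>(PV ` \<O>)"
        unfolding PV_def by blast
      have PVo: "\<And>W. W \<in> PV ` \<O> \<Longrightarrow> openin (cube n) W"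
        unfolding PV_def using pre_open[OF _ p(2)] opens by blast
      define Q where "Q = {(a,b). a \<in> \<Union>(PV ` \<O>) \<and> b \<in> \<Union>(PV ` \<O>) \<and> (real_pt B n x a, real_pt B n x b) \<in> R}"
      have "dcube_circ n (\<Union>(PV ` \<O>)) = pc (\<Union>(PV ` \<O>)) (\<Union>W\<in>PV ` \<O>. dcube_circ n W)"
        by (rule circ_union[OF dcube_circ PVo])
      also have "\<dots> \<subseteq> Q"
      proof (rule pc_least)
        show "preorder_on (\<Union>(PV ` \<O>)) Q"
        proof (rule preorder_onI)
          fix a assume "a \<in> \<Union>(PV ` \<O>)"
          then have "real_pt B n x a \<in> \<Union>\<O>" unfolding PV_def by blast
          then have "(real_pt B n x a, real_pt B n x a) \<in> R" by (rule preorder_onD2[OF R])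
          then show "(a,a) \<in> Q"
            using \<open>a \<in> \<Union>(PV ` \<O>)\<close> unfolding Q_def by simp
        next
          fix a b c
          assume "(a,b) \<in> Q"
            "(b,c) \<in> Q"
          then have "a \<in> \<Union>(PV ` \<O>)" "c \<in> \<Union>(PV ` \<O>)" "(real_pt B n x a, real_pt B n x b) \<in> R"
            "(real_pt B n x b, real_pt B n x c) \<in> R" unfolding Q_def by simp_all
          moreover have "(real_pt B n x a, real_pt B n x c) \<in> R"
            using preorder_onD3[OF R] calculation(3,4) by metis
          ultimately show "(a,c) \<in> Q"
            unfolding Q_def by simp
        next
          show "Q \<subseteq> \<Union>(PV ` \<O>) \<times> \<Union>(PV ` \<O>)"
          proof
            fix ab assume "ab \<in> Q"
            then obtain a b where "ab = (a,b)" "a \<in> \<Union>(PV ` \<O>)" "b \<in> \<Union>(PV ` \<O>)"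
              unfolding Q_def by blast
            then show "ab \<in> \<Union>(PV ` \<O>) \<times> \<Union>(PV ` \<O>)" by simp
          qed
        qed
        show "(\<Union>W\<in>PV ` \<O>. dcube_circ n W) \<subseteq> Q"
        proof
          fix ab assume "ab \<in> (\<Union>W\<in>PV ` \<O>. dcube_circ n W)"
          then obtain W where W: "W \<in> PV ` \<O>" "ab \<in> dcube_circ n W" by (rule UN_E)
          from W(1) obtain V where V1: "V \<in> \<O>" and WV: "W = PV V" by (rule imageE)
          obtain a b where ab: "ab = (a,b)" by (cases ab)
          have V: "V \<in> \<O>" "ab = (a,b)" "(a,b) \<in> dcube_circ n (PV V)"
            using V1 ab W(2) WV by simp_all
          have Vo: "openin (real_top B) V" using opens V(1) by (rule bspec)
          have abP: "a \<in> PV V" "b \<in> PV V"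
            using preorder_onD1[OF circ_preorder[OF dcube_circ pre_open[OF Vo p(2)]]] V(3) unfolding PV_def by auto
          have "(real_pt B n x a, real_pt B n x b) \<in> GenR B V"
            by (rule GenR_I[OF p(2)]) (use V(3) in \<open>simp add: PV_def\<close>)
          also have "\<dots> \<subseteq> Cf B V" unfolding Cf_def by (rule pc_gen)
          also have "\<dots> \<subseteq> R" unfolding R_def using V(1) pc_gen[of "\<Union>V\<in>\<O>. Cf B V" "\<Union>\<O>"] by blast
          finally have "(real_pt B n x a, real_pt B n x b) \<in> R" .
          moreover have "a \<in> \<Union>(PV ` \<O>)" "b \<in> \<Union>(PV ` \<O>)" using abP V(1) by blast+
          ultimately show "ab \<in> Q"
            using V(2) unfolding Q_def by simp
        qed
      qed
      finally have sub: "dcube_circ n (\<Union>(PV ` \<O>)) \<subseteq> Q" .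
      have "(s,t) \<in> dcube_circ n (\<Union>(PV ` \<O>))" using p(3) unfolding PU .
      then have "(s,t) \<in> Q" by (rule subsetD[OF sub])
      then have "(real_pt B n x s, real_pt B n x t) \<in> R" unfolding Q_def by simp
      then show "p \<in> pc (\<Union>\<O>) (\<Union>V\<in>\<O>. Cf B V)" using p(1) unfolding R_def by simp
    qed
  qed
  moreover have "pc (\<Union>\<O>) (\<Union>V\<in>\<O>. Cf B V) \<subseteq> Cf B (\<Union>\<O>)"
  proof (rule pc_least[OF Cf_preorder[OF Uo]])
    show "(\<Union>V\<in>\<O>. Cf B V) \<subseteq> Cf B (\<Union>\<O>)"
    proof
      fix p assume "p \<in> (\<Union>V\<in>\<O>. Cf B V)"
      then obtain V where V: "V \<in> \<O>" "p \<in> Cf B V" by blast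
      have "Cf B V \<subseteq> Cf B (\<Union>\<O>)" by (rule Cf_mono[OF _ Uo]) (use opens V(1) in blast)+
      then show "p \<in> Cf B (\<Union>\<O>)" using V(2) by blast
    qed
  qed
  ultimately show "Cf B (\<Union>\<O>) = pc (\<Union>\<O>) (\<Union>V\<in>\<O>. Cf B V)" by (rule subset_antisym)
qed

lemma Cf_map: "x \<in> fst B n \<Longrightarrow> stream_map (dcube n) (real_top B, Cf B) (real_pt B n x)"
  unfolding stream_map_def dcube_def
proof (intro conjI allI impI)
  assume x: "x \<in> fst B n"
  show "continuous_map (fst (cube n, dcube_circ n)) (fst (real_top B, Cf B)) (real_pt B n x)"
    using real_pt_cont[OF x] by simp
  fix V s t
  assume "openin (fst (real_top B, Cf B)) V"
    "(s, t) \<in> snd (cube n, dcube_circ n) {z \<in> topspace (fst (cube n, dcube_circ n)). real_pt B n x z \<in> V}"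
  then have "(real_pt B n x s, real_pt B n x t) \<in> GenR B V"
    unfolding GenR_def using x by auto
  then show "(real_pt B n x s, real_pt B n x t) \<in> snd (real_top B, Cf B) V"
    unfolding Cf_def using pc_gen by auto
qed

lemma Cf_least:
  assumes C: "is_circulation (real_top B) C'"
    and maps: "\<forall>n. \<forall>x\<in>fst B n. stream_map (dcube n) (real_top B, C') (real_pt B n x)"
    and U: "openin (real_top B) U"
  shows "Cf B U \<subseteq> C' U"
  unfolding Cf_def
proof (rule pc_least[OF circ_preorder[OF C U]])
  show "GenR B U \<subseteq> C' U"
  proof
    fix p assume "p \<in> GenR B U"
    then obtain n x s t where p: "p = (real_pt B n x s, real_pt B n x t)" "x \<in> fst B n"
      "(s,t) \<in> dcube_circ n {z \<in> topspace (cube n). real_pt B n x z \<in> U}"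
      unfolding GenR_def by blast
    then show "p \<in> C' U" using maps U unfolding stream_map_def dcube_def by auto
  qed
qed

lemma real_circ_prop:
  "is_circulation (real_top B) (real_circ B) \<and>
      (\<forall>n. \<forall>x\<in>fst B n. stream_map (dcube n) (real_top B, real_circ B) (real_pt B n x)) \<and>
      (\<forall>C'. is_circulation (real_top B) C' \<and>
            (\<forall>n. \<forall>x\<in>fst B n. stream_map (dcube n) (real_top B, C') (real_pt B n x)) \<longrightarrow>
           (\<forall>V. openin (real_top B) V \<longrightarrow> real_circ B V \<subseteq> C' V))"
  unfolding real_circ_def
  by (rule someI[of _ "Cf B"]) (use Cf_circ Cf_map Cf_least in blast)

lemma real_circ_circ: "is_circulation (real_top B) (real_circ B)"
  using real_circ_prop by blast

lemma real_circ_sub: "openin (real_top B) U \<Longrightarrow> real_circ B U \<subseteq> Cf B U"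
  using real_circ_prop Cf_circ Cf_map by blast

end


definition cc :: "real \<Rightarrow> complex" where
  "cc a = exp (- (\<i> * of_real (2 * pi * a)))"

lemma norm_cc [simp]: "norm (cc a) = 1"
proof -
  have "cc a = exp (\<i> * of_real (- (2 * pi * a)))" unfolding cc_def by simp
  then show ?thesis by (simp only: norm_exp_i_times)
qed

lemma expeq_int:
  assumes "exp (\<i> * of_real (2 * pi * x)) = exp (\<i> * of_real (2 * pi * y))"
  shows "\<exists>n::int. x = y + of_int n"
proof -
  obtain n :: int where n: "\<i> * of_real (2 * pi * x) = \<i> * of_real (2 * pi * y) + (of_int (2 * n) * pi) * \<i>"
    using assms exp_eq by blast
  then have "Im (\<i> * of_real (2 * pi * x)) = Im (\<i> * of_real (2 * pi * y) + (of_int (2 * n) * pi) * \<i>)"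
    by simp
  then have "2 * pi * x = 2 * pi * y + 2 * of_int n * pi" by simp
  then have "(2 * pi) * (x - (y + of_int n)) = 0" by (simp add: algebra_simps)
  then have "x - (y + of_int n) = 0" by simp
  then have "x = y + of_int n" by simp
  then show ?thesis by blast
qed

context pcs begin

definition Ua :: "real \<Rightarrow> 'c rpt set" where
  "Ua a = {P \<in> quot. Gf P * cc a \<notin> \<real>\<^sub>\<le>\<^sub>0}"

definition La :: "real \<Rightarrow> 'c rpt \<Rightarrow> real" where
  "La a P = a + Arg (Gf P * cc a) / (2 * pi)"

lemma Gf_cont': "continuous_map (real_top B) euclidean (\<lambda>P. Gf P * cc a)"
proof -
  have "continuous_map euclidean euclidean (\<lambda>z::complex. z * cc a)"
    unfolding continuous_map_iff_continuous2 by (intro continuous_intros)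
  from continuous_map_compose[OF Gf_cont this] show ?thesis by (simp add: o_def)
qed

lemma Ua_sub: "Ua a \<subseteq> quot"
  unfolding Ua_def by blast

lemma Ua_open: "openin (real_top B) (Ua a)"
proof -
  have "openin euclidean (- \<real>\<^sub>\<le>\<^sub>0 :: complex set)" by (simp add: open_Compl)
  from openin_continuous_map_preimage[OF Gf_cont' this]
  show ?thesis unfolding Ua_def topspace_real_top by simp
qed

lemma Ua_cover: "quot \<subseteq> Ua 0 \<union> Ua (1/2)"
proof
  fix P assume P: "P \<in> quot"
  show "P \<in> Ua 0 \<union> Ua (1/2)"
  proof (cases "Gf P \<in> \<real>\<^sub>\<le>\<^sub>0")
    case False
    then show ?thesis using P unfolding Ua_def cc_def by simp
  next
    case True
    then have "Re (Gf P) \<le> 0" "Im (Gf P) = 0" by (auto simp: complex_nonpos_Reals_iff)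
    moreover have "norm (Gf P) = 1" using norm_Gf[OF P] .
    ultimately have "Gf P = -1"
    proof -
      assume a: "Re (Gf P) \<le> 0" "Im (Gf P) = 0" "norm (Gf P) = 1"
      have e: "Gf P = complex_of_real (Re (Gf P))" using a(2) by (simp add: complex_eq_iff)
      then have "\<bar>Re (Gf P)\<bar> = 1" using a(3) by (metis norm_of_real)
      then have "Re (Gf P) = -1" using a(1) by linarith
      then show ?thesis using e by simp
    qed
    moreover have "cc (1/2) = -1"
    proof -
      have "cc (1/2) = exp (- (pi * \<i>))" unfolding cc_def by (simp add: mult.commute)
      then show ?thesis by (simp add: exp_minus)
    qed
    ultimately show ?thesis using P unfolding Ua_def by simp
  qed
qed

lemma La_exp:
  assumes "P \<in> quot"
  shows "exp (\<i> * of_real (2 * pi * La a P)) = Gf P"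
proof -
  define w where "w = Gf P * cc a"
  have nw: "norm w = 1" unfolding w_def using norm_Gf[OF assms] by (simp add: norm_mult)
  then have "w \<noteq> 0" by auto
  then have "w = of_real (norm w) * exp (\<i> * of_real (Arg w))" by (rule Arg_eq)
  then have ew: "exp (\<i> * of_real (Arg w)) = w" using nw by simp
  have "\<i> * of_real (2 * pi * La a P) = \<i> * of_real (2 * pi * a) + \<i> * of_real (Arg w)"
    unfolding La_def w_def by (simp add: algebra_simps)
  then have "exp (\<i> * of_real (2 * pi * La a P)) = exp (\<i> * of_real (2 * pi * a)) * w"
    using ew by (simp add: exp_add)
  also have "\<dots> = Gf P * (exp (\<i> * of_real (2 * pi * a)) * cc a)" unfolding w_def by (simp add: algebra_simps)
  also have "exp (\<i> * of_real (2 * pi * a)) * cc a = 1" unfolding cc_def by (simp add: exp_minus)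
  finally show ?thesis by simp
qed

lemma La_cont: "continuous_map (subtopology (real_top B) (Ua a)) euclideanreal (La a)"
proof -
  have w: "continuous_map (subtopology (real_top B) (Ua a)) (top_of_set (- \<real>\<^sub>\<le>\<^sub>0)) (\<lambda>P. Gf P * cc a)"
    unfolding continuous_map_in_subtopology
  proof
    show "continuous_map (subtopology (real_top B) (Ua a)) euclidean (\<lambda>P. Gf P * cc a)"
      by (rule continuous_map_from_subtopology[OF Gf_cont'])
    show "(\<lambda>P. Gf P * cc a) \<in> topspace (subtopology (real_top B) (Ua a)) \<rightarrow> - \<real>\<^sub>\<le>\<^sub>0"
      unfolding Ua_def by auto
  qed
  have "continuous_map (top_of_set (- \<real>\<^sub>\<le>\<^sub>0)) euclideanreal (\<lambda>z. a + Arg z / (2 * pi))"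
    unfolding continuous_map_iff_continuous by (intro continuous_intros continuous_on_Arg) auto
  from continuous_map_compose[OF w this] show ?thesis unfolding La_def by (simp add: o_def)
qed

end


definition enc :: "real \<Rightarrow> (real \<Rightarrow> 'a set) set" where
  "enc r = {\<lambda>s. if s = r then UNIV else {}}"

lemma enc_inj: "inj (enc :: real \<Rightarrow> (real \<Rightarrow> 'a set) set)"
proof (rule injI)
  fix r r' :: real assume e: "enc r = (enc r' :: (real \<Rightarrow> 'a set) set)"
  have "(\<lambda>s::real. if s = r then (UNIV::'a set) else {}) \<in> enc r" unfolding enc_def by simp
  then have "(\<lambda>s::real. if s = r then (UNIV::'a set) else {}) \<in> enc r'" using e by simp
  then have "(\<lambda>s::real. if s = r then (UNIV::'a set) else {}) = (\<lambda>s. if s = r' then UNIV else {})"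
    unfolding enc_def by simp
  from fun_cong[OF this, of r] show "r = r'" by (auto split: if_splits)
qed

definition dec :: "(real \<Rightarrow> 'a set) set \<Rightarrow> real" where
  "dec = inv enc"

lemma dec_enc [simp]: "dec (enc r) = r"
  unfolding dec_def by (rule inv_f_f[OF enc_inj])

context pcs begin

definition Eset :: "('c rpt \<times> (real \<Rightarrow> 'c rpt) set) set" where
  "Eset = {(P, enc r) | P r. P \<in> quot \<and> Gf P = exp (\<i> * of_real (2 * pi * r))}"

definition piE :: "'c rpt \<times> (real \<Rightarrow> 'c rpt) set \<Rightarrow> 'c rpt \<times> real" where
  "piE e = (fst e, dec (snd e))"

definition TE :: "('c rpt \<times> (real \<Rightarrow> 'c rpt) set) topology" where
  "TE = pullback_topology Eset piE (prod_topology (real_top B) euclideanreal)"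

definition ht :: "'c rpt \<times> (real \<Rightarrow> 'c rpt) set \<Rightarrow> real" where
  "ht e = dec (snd e)"

definition Wk :: "real \<Rightarrow> int \<Rightarrow> ('c rpt \<times> (real \<Rightarrow> 'c rpt) set) set" where
  "Wk a k = {e \<in> Eset. fst e \<in> Ua a \<and> ht e = La a (fst e) + of_int k}"

definition gk :: "real \<Rightarrow> int \<Rightarrow> 'c rpt \<Rightarrow> 'c rpt \<times> (real \<Rightarrow> 'c rpt) set" where
  "gk a k P = (P, enc (La a P + of_int k))"

lemma Eset_iff: "e \<in> Eset \<longleftrightarrow> fst e \<in> quot \<and> snd e = enc (ht e) \<and> Gf (fst e) = exp (\<i> * of_real (2 * pi * ht e))"
proof
  assume "e \<in> Eset"
  then obtain P r where "e = (P, enc r)" "P \<in> quot" "Gf P = exp (\<i> * of_real (2 * pi * r))"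
    unfolding Eset_def by blast
  then show "fst e \<in> quot \<and> snd e = enc (ht e) \<and> Gf (fst e) = exp (\<i> * of_real (2 * pi * ht e))"
    by (simp add: ht_def)
next
  assume a: "fst e \<in> quot \<and> snd e = enc (ht e) \<and> Gf (fst e) = exp (\<i> * of_real (2 * pi * ht e))"
  then have "e = (fst e, enc (ht e))" by (metis prod.collapse)
  then show "e \<in> Eset" unfolding Eset_def using a by blast
qed

lemma topspace_TE: "topspace TE = Eset"
  unfolding TE_def topspace_pullback_topology topspace_real_top
  using Eset_iff by (auto simp: piE_def topspace_real_top)

lemma exp_shift: "exp (\<i> * of_real (2 * pi * (x + of_int k))) = exp (\<i> * of_real (2 * pi * x))"
proof -
  have "\<i> * of_real (2 * pi * (x + of_int k)) = \<i> * of_real (2 * pi * x) + (of_int (2 * k) * pi) * \<i>"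
    by (simp add: algebra_simps)
  then show ?thesis using exp_eq by blast
qed

lemma gk_in:
  assumes "P \<in> Ua a"
  shows "gk a k P \<in> Wk a k" "fst (gk a k P) = P" "ht (gk a k P) = La a P + of_int k"
proof -
  have P: "P \<in> quot" using assms Ua_sub by blast
  show "fst (gk a k P) = P" "ht (gk a k P) = La a P + of_int k" by (simp_all add: gk_def ht_def)
  have "Gf P = exp (\<i> * of_real (2 * pi * (La a P + of_int k)))"
    using La_exp[OF P] exp_shift by simp
  then have "gk a k P \<in> Eset" unfolding Eset_def gk_def using P by blast
  then show "gk a k P \<in> Wk a k" unfolding Wk_def using assms by (simp add: gk_def ht_def)
qed

lemma Wk_eq: "e \<in> Wk a k \<Longrightarrow> gk a k (fst e) = e"
  unfolding Wk_def gk_def using Eset_iff by (metis (mono_tags, lifting) mem_Collect_eq prod.collapse)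

lemma Wk_sub: "Wk a k \<subseteq> Eset"
  unfolding Wk_def by blast

lemma fst_Wk: "fst ` Wk a k = Ua a"
proof
  show "fst ` Wk a k \<subseteq> Ua a" unfolding Wk_def by blast
  show "Ua a \<subseteq> fst ` Wk a k"
  proof
    fix P assume "P \<in> Ua a"
    then show "P \<in> fst ` Wk a k" using gk_in[of P a] by (metis image_eqI)
  qed
qed

lemma ht_int:
  assumes "e \<in> Eset" "fst e \<in> Ua a"
  shows "\<exists>n::int. ht e = La a (fst e) + of_int n"
proof -
  have "exp (\<i> * of_real (2 * pi * ht e)) = exp (\<i> * of_real (2 * pi * La a (fst e)))"
    using assms(1) La_exp[of "fst e" a] Eset_iff by auto
  then show ?thesis by (rule expeq_int)
qed

lemma Wk_cover: "{e \<in> Eset. fst e \<in> Ua a} = (\<Union>k. Wk a k)"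
proof
  show "{e \<in> Eset. fst e \<in> Ua a} \<subseteq> (\<Union>k. Wk a k)"
  proof
    fix e assume "e \<in> {e \<in> Eset. fst e \<in> Ua a}"
    then have e: "e \<in> Eset" "fst e \<in> Ua a" by auto
    then obtain n where "ht e = La a (fst e) + of_int n" using ht_int by blast
    then have "e \<in> Wk a n" unfolding Wk_def using e by blast
    then show "e \<in> (\<Union>k. Wk a k)" by blast
  qed
  show "(\<Union>k. Wk a k) \<subseteq> {e \<in> Eset. fst e \<in> Ua a}" unfolding Wk_def by blast
qed

lemma Wk_disj: "k \<noteq> k' \<Longrightarrow> Wk a k \<inter> Wk a k' = {}"
  unfolding Wk_def by auto

lemma fst_cont: "continuous_map TE (real_top B) fst"
proof -
  have "continuous_map TE (real_top B) (fst \<circ> piE)"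
    unfolding TE_def by (rule continuous_map_pullback[OF continuous_map_fst])
  moreover have "fst \<circ> piE = fst" by (auto simp: piE_def)
  ultimately show ?thesis by simp
qed

lemma gk_cont: "continuous_map (subtopology (real_top B) (Ua a)) TE (gk a k)"
  unfolding TE_def
proof (rule continuous_map_pullback')
  have "piE \<circ> gk a k = (\<lambda>P. (P, La a P + of_int k))" by (auto simp: piE_def gk_def)
  moreover have "continuous_map (subtopology (real_top B) (Ua a)) (prod_topology (real_top B) euclideanreal) (\<lambda>P. (P, La a P + of_int k))"
  proof (rule continuous_map_pairedI)
    show "continuous_map (subtopology (real_top B) (Ua a)) (real_top B) (\<lambda>P. P)"
      by (rule continuous_map_from_subtopology[OF continuous_map_id[unfolded id_def]])
    show "continuous_map (subtopology (real_top B) (Ua a)) euclideanreal (\<lambda>P. La a P + of_int k)"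
      by (rule continuous_map_add[OF La_cont]) simp
  qed
  ultimately show "continuous_map (subtopology (real_top B) (Ua a)) (prod_topology (real_top B) euclideanreal) (piE \<circ> gk a k)"
    by simp
  show "topspace (subtopology (real_top B) (Ua a)) \<subseteq> gk a k -` Eset"
  proof
    fix P assume "P \<in> topspace (subtopology (real_top B) (Ua a))"
    then have "P \<in> Ua a" by simp
    then have "gk a k P \<in> Wk a k" by (rule gk_in(1))
    then show "P \<in> gk a k -` Eset" using Wk_sub by blast
  qed
qed

lemma Wk_open: "openin TE (Wk a k)"
proof -
  define S where "S = Ua a \<times> (UNIV :: real set)"
  have So: "openin (prod_topology (real_top B) euclideanreal) S"
    unfolding S_def openin_prod_Times_iff using Ua_open by simp
  have sub: "subtopology (prod_topology (real_top B) euclideanreal) S = prod_topology (subtopology (real_top B) (Ua a)) euclideanreal"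
    unfolding S_def subtopology_Times by simp
  have hc: "continuous_map (subtopology (prod_topology (real_top B) euclideanreal) S) euclideanreal (\<lambda>x. snd x - La a (fst x) - of_int k)"
    unfolding sub by (intro continuous_map_diff continuous_map_snd continuous_map_const[THEN iffD2] continuous_map_compose[OF continuous_map_fst La_cont, unfolded o_def]) simp
  define Oset where "Oset = {x \<in> topspace (subtopology (prod_topology (real_top B) euclideanreal) S). snd x - La a (fst x) - of_int k \<in> {-1/2<..<1/2}}"
  have "openin (subtopology (prod_topology (real_top B) euclideanreal) S) Oset"
    unfolding Oset_def by (rule openin_continuous_map_preimage[OF hc]) simp
  then have Oo: "openin (prod_topology (real_top B) euclideanreal) Oset" using So by (rule openin_trans_full)
  have "Wk a k = piE -` Oset \<inter> Eset"
  proof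
    show "Wk a k \<subseteq> piE -` Oset \<inter> Eset"
    proof
      fix e assume e: "e \<in> Wk a k"
      then have "e \<in> Eset" "fst e \<in> Ua a" "ht e = La a (fst e) + of_int k" unfolding Wk_def by auto
      then show "e \<in> piE -` Oset \<inter> Eset"
        unfolding Oset_def S_def using Ua_sub by (auto simp: piE_def ht_def topspace_real_top)
    qed
    show "piE -` Oset \<inter> Eset \<subseteq> Wk a k"
    proof
      fix e assume e: "e \<in> piE -` Oset \<inter> Eset"
      then have e1: "e \<in> Eset" "fst e \<in> Ua a" and e2: "-1/2 < ht e - La a (fst e) - of_int k"
         "ht e - La a (fst e) - of_int k < 1/2"
        unfolding Oset_def S_def by (auto simp: piE_def ht_def)
      obtain n where n: "ht e = La a (fst e) + of_int n" using ht_int[OF e1] by blast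
      then have "real_of_int (-1) < real_of_int (n - k)" "real_of_int (n - k) < real_of_int 1" using e2 by simp_all
      then have "-1 < n - k" "n - k < 1" by (simp_all only: of_int_less_iff)
      then have "n = k" by simp
      then show "e \<in> Wk a k" unfolding Wk_def using e1 n by blast
    qed
  qed
  then show ?thesis unfolding TE_def openin_pullback_topology using Oo by blast
qed

lemma fst_img_open:
  assumes "openin TE V"
  shows "openin (real_top B) (fst ` (V \<inter> Wk a k))"
proof -
  have "fst ` (V \<inter> Wk a k) = {P \<in> topspace (subtopology (real_top B) (Ua a)). gk a k P \<in> V}"
  proof
    show "fst ` (V \<inter> Wk a k) \<subseteq> {P \<in> topspace (subtopology (real_top B) (Ua a)). gk a k P \<in> V}"
    proof
      fix P assume "P \<in> fst ` (V \<inter> Wk a k)"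
      then obtain e where e: "e \<in> V" "e \<in> Wk a k" "P = fst e" by blast
      then have "gk a k P = e" using Wk_eq by blast
      moreover have "P \<in> Ua a" using e fst_Wk by blast
      ultimately show "P \<in> {P \<in> topspace (subtopology (real_top B) (Ua a)). gk a k P \<in> V}"
        using e(1) Ua_sub by (auto simp: topspace_real_top)
    qed
    show "{P \<in> topspace (subtopology (real_top B) (Ua a)). gk a k P \<in> V} \<subseteq> fst ` (V \<inter> Wk a k)"
    proof
      fix P assume P: "P \<in> {P \<in> topspace (subtopology (real_top B) (Ua a)). gk a k P \<in> V}"
      then have "P \<in> Ua a" by simp
      then have "gk a k P \<in> Wk a k" "fst (gk a k P) = P" using gk_in by auto
      then show "P \<in> fst ` (V \<inter> Wk a k)" using P by (metis (no_types, lifting) IntI image_eqI mem_Collect_eq)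
    qed
  qed
  moreover have "openin (subtopology (real_top B) (Ua a)) {P \<in> topspace (subtopology (real_top B) (Ua a)). gk a k P \<in> V}"
    by (rule openin_continuous_map_preimage[OF gk_cont assms])
  ultimately show ?thesis using Ua_open by (metis openin_trans_full)
qed

end


context pcs begin

definition GenE :: "('c rpt \<times> (real \<Rightarrow> 'c rpt) set) set \<Rightarrow> (('c rpt \<times> (real \<Rightarrow> 'c rpt) set) \<times> ('c rpt \<times> (real \<Rightarrow> 'c rpt) set)) set" where
  "GenE V = {(e1,e2). \<exists>a k. e1 \<in> V \<inter> Wk a k \<and> e2 \<in> V \<inter> Wk a k \<and>
      (fst e1, fst e2) \<in> real_circ B (fst ` (V \<inter> Wk a k))}"

definition CE :: "('c rpt \<times> (real \<Rightarrow> 'c rpt) set) set \<Rightarrow> (('c rpt \<times> (real \<Rightarrow> 'c rpt) set) \<times> ('c rpt \<times> (real \<Rightarrow> 'c rpt) set)) set" where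
  "CE V = pc V (GenE V)"

lemma GenE_sub: "GenE V \<subseteq> V \<times> V"
  unfolding GenE_def by blast

lemma CE_preorder: "preorder_on V (CE V)"
  unfolding CE_def by (rule pc_preorder[OF GenE_sub])

lemma GenE_I:
  assumes "e1 \<in> V \<inter> Wk a k" "e2 \<in> V \<inter> Wk a k" "(fst e1, fst e2) \<in> real_circ B (fst ` (V \<inter> Wk a k))"
  shows "(e1, e2) \<in> GenE V"
  unfolding GenE_def using assms by blast

lemma GenE_mono:
  assumes "openin TE V" "openin TE V'" "V \<subseteq> V'"
  shows "GenE V \<subseteq> GenE V'"
proof
  fix p assume "p \<in> GenE V"
  then obtain e1 e2 a k where p: "p = (e1,e2)" "e1 \<in> V \<inter> Wk a k" "e2 \<in> V \<inter> Wk a k"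
    "(fst e1, fst e2) \<in> real_circ B (fst ` (V \<inter> Wk a k))"
    unfolding GenE_def by blast
  have "real_circ B (fst ` (V \<inter> Wk a k)) \<subseteq> real_circ B (fst ` (V' \<inter> Wk a k))"
    by (rule circ_mono[OF real_circ_circ fst_img_open[OF assms(1)] fst_img_open[OF assms(2)]])
      (use assms(3) in blast)
  then show "p \<in> GenE V'"
    using p assms(3) GenE_I[of e1 V' a k e2] by blast
qed

lemma CE_mono: "openin TE V \<Longrightarrow> openin TE V' \<Longrightarrow> V \<subseteq> V' \<Longrightarrow> CE V \<subseteq> CE V'"
  unfolding CE_def by (rule pc_mono[OF GenE_sub GenE_sub _ GenE_mono])

lemma CE_circ: "is_circulation TE CE"
  unfolding is_circulation_iff
proof (intro conjI allI impI)
  fix V show "preorder_on V (CE V)" by (rule CE_preorder)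
next
  fix \<O> assume opens: "\<forall>V\<in>\<O>. openin TE V"
  have Uo: "openin TE (\<Union>\<O>)" using opens by (intro openin_Union) blast
  have gsub: "(\<Union>V\<in>\<O>. CE V) \<subseteq> \<Union>\<O> \<times> \<Union>\<O>"
  proof
    fix p assume "p \<in> (\<Union>V\<in>\<O>. CE V)"
    then obtain V where "V \<in> \<O>" "p \<in> CE V" by blast
    then have "p \<in> V \<times> V" using preorder_onD1[OF CE_preorder, of V] by blast
    then show "p \<in> \<Union>\<O> \<times> \<Union>\<O>" using \<open>V \<in> \<O>\<close> by blast
  qed
  define R where "R = pc (\<Union>\<O>) (\<Union>V\<in>\<O>. CE V)"
  have R: "preorder_on (\<Union>\<O>) R" unfolding R_def by (rule pc_preorder[OF gsub])
  have "CE (\<Union>\<O>) \<subseteq> R"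
    unfolding CE_def[of "\<Union>\<O>"]
  proof (rule pc_least[OF R])
    show "GenE (\<Union>\<O>) \<subseteq> R"
    proof
      fix p assume "p \<in> GenE (\<Union>\<O>)"
      then obtain e1 e2 a k where p: "p = (e1,e2)" "e1 \<in> \<Union>\<O> \<inter> Wk a k" "e2 \<in> \<Union>\<O> \<inter> Wk a k"
        "(fst e1, fst e2) \<in> real_circ B (fst ` (\<Union>\<O> \<inter> Wk a k))"
        unfolding GenE_def by blast
      define g where "g = gk a k"
      define PV where "PV = (\<lambda>V. fst ` (V \<inter> Wk a k))"
      define Uo' where "Uo' = fst ` (\<Union>\<O> \<inter> Wk a k)"
      have UU: "Uo' = \<Union>(PV ` \<O>)" unfolding Uo'_def PV_def by blast
      have PVo: "\<And>W. W \<in> PV ` \<O> \<Longrightarrow> openin (real_top B) W"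
      proof -
        fix W assume "W \<in> PV ` \<O>"
        then obtain V where "V \<in> \<O>" "W = PV V" by (rule imageE)
        then show "openin (real_top B) W" unfolding PV_def using opens fst_img_open by blast
      qed
      have gback: "g (fst e) = e" if "e \<in> Wk a k" for e using Wk_eq[OF that] unfolding g_def .
      define Q where "Q = {(u,v). u \<in> Uo' \<and> v \<in> Uo' \<and> (g u, g v) \<in> R}"
      have "real_circ B (\<Union>(PV ` \<O>)) = pc (\<Union>(PV ` \<O>)) (\<Union>W\<in>PV ` \<O>. real_circ B W)"
        by (rule circ_union[OF real_circ_circ PVo])
      also have "\<dots> \<subseteq> Q"
      proof (rule pc_least)
        show "preorder_on (\<Union>(PV ` \<O>)) Q"
        proof (rule preorder_onI)
          show "Q \<subseteq> \<Union>(PV ` \<O>) \<times> \<Union>(PV ` \<O>)"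
          proof
            fix uv assume "uv \<in> Q"
            then obtain u v where "uv = (u,v)" "u \<in> Uo'" "v \<in> Uo'" unfolding Q_def by blast
            then show "uv \<in> \<Union>(PV ` \<O>) \<times> \<Union>(PV ` \<O>)" using UU by simp
          qed
        next
          fix u assume "u \<in> \<Union>(PV ` \<O>)"
          then have u: "u \<in> Uo'" using UU by simp
          then obtain e where e: "e \<in> \<Union>\<O> \<inter> Wk a k" "u = fst e" unfolding Uo'_def by blast
          then have "g u = e" using gback by blast
          then have "(g u, g u) \<in> R" using preorder_onD2[OF R] e(1) by simp
          then show "(u,u) \<in> Q" unfolding Q_def using u by simp
        next
          fix u v w assume "(u,v) \<in> Q" "(v,w) \<in> Q"
          then have "u \<in> Uo'" "w \<in> Uo'" "(g u, g v) \<in> R" "(g v, g w) \<in> R" unfolding Q_def by simp_all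
          moreover have "(g u, g w) \<in> R" using preorder_onD3[OF R] calculation(3,4) by metis
          ultimately show "(u,w) \<in> Q" unfolding Q_def by simp
        qed
        show "(\<Union>W\<in>PV ` \<O>. real_circ B W) \<subseteq> Q"
        proof
          fix uv assume "uv \<in> (\<Union>W\<in>PV ` \<O>. real_circ B W)"
          then obtain W where W: "W \<in> PV ` \<O>" "uv \<in> real_circ B W" by (rule UN_E)
          from W(1) obtain V where V: "V \<in> \<O>" "W = PV V" by (rule imageE)
          obtain u v where uv: "uv = (u,v)" by (cases uv)
          have Vo: "openin TE V" using opens V(1) by (rule bspec)
          have Wo: "openin (real_top B) W" using PVo W(1) by blast
          have uvW: "u \<in> W" "v \<in> W"
            using preorder_onD1[OF circ_preorder[OF real_circ_circ Wo]] W(2) uv by auto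
          obtain eu where eu: "eu \<in> V \<inter> Wk a k" "u = fst eu" using uvW(1) V(2) unfolding PV_def by blast
          obtain ev where ev: "ev \<in> V \<inter> Wk a k" "v = fst ev" using uvW(2) V(2) unfolding PV_def by blast
          have gu: "g u = eu" "g v = ev" using gback eu ev by blast+
          have "(eu, ev) \<in> GenE V"
            by (rule GenE_I) (use eu ev W(2) uv V(2) in \<open>simp_all add: PV_def\<close>)
          also have "\<dots> \<subseteq> CE V" unfolding CE_def by (rule pc_gen)
          also have "\<dots> \<subseteq> R" unfolding R_def using V(1) pc_gen[of "\<Union>V\<in>\<O>. CE V" "\<Union>\<O>"] by blast
          finally have "(g u, g v) \<in> R" using gu by simp
          moreover have "u \<in> Uo'" "v \<in> Uo'" using eu ev V(1) unfolding Uo'_def by blast+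
          ultimately show "uv \<in> Q" unfolding Q_def using uv by simp
        qed
      qed
      finally have sub: "real_circ B (\<Union>(PV ` \<O>)) \<subseteq> Q" .
      have "(fst e1, fst e2) \<in> real_circ B (\<Union>(PV ` \<O>))" using p(4) UU unfolding Uo'_def by simp
      then have "(fst e1, fst e2) \<in> Q" by (rule subsetD[OF sub])
      then have "(g (fst e1), g (fst e2)) \<in> R" unfolding Q_def by simp
      then show "p \<in> R" using p(1) gback p(2,3) by simp
    qed
  qed
  moreover have "R \<subseteq> CE (\<Union>\<O>)" unfolding R_def
  proof (rule pc_least[OF CE_preorder])
    show "(\<Union>V\<in>\<O>. CE V) \<subseteq> CE (\<Union>\<O>)"
    proof
      fix p assume "p \<in> (\<Union>V\<in>\<O>. CE V)"
      then obtain V where V: "V \<in> \<O>" "p \<in> CE V" by blast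
      have "CE V \<subseteq> CE (\<Union>\<O>)" by (rule CE_mono[OF _ Uo]) (use opens V(1) in blast)+
      then show "p \<in> CE (\<Union>\<O>)" using V(2) by blast
    qed
  qed
  ultimately show "CE (\<Union>\<O>) = pc (\<Union>\<O>) (\<Union>V\<in>\<O>. CE V)" unfolding R_def by (rule subset_antisym)
qed

lemma CE_fwd:
  assumes V': "openin TE V'" and V: "openin (real_top B) V" and sub: "fst ` V' \<subseteq> V"
    and xy: "(x,y) \<in> CE V'"
  shows "(fst x, fst y) \<in> real_circ B V"
proof -
  have CBV: "preorder_on V (real_circ B V)" by (rule circ_preorder[OF real_circ_circ V])
  define R where "R = {(x,y). x \<in> V' \<and> y \<in> V' \<and> (fst x, fst y) \<in> real_circ B V}"
  have "CE V' \<subseteq> R" unfolding CE_def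
  proof (rule pc_least)
    show "preorder_on V' R"
    proof (rule preorder_onI)
      show "R \<subseteq> V' \<times> V'" unfolding R_def by blast
      fix x assume "x \<in> V'"
      then have "fst x \<in> V" using sub by blast
      then have "(fst x, fst x) \<in> real_circ B V" by (rule preorder_onD2[OF CBV])
      then show "(x,x) \<in> R" unfolding R_def using \<open>x \<in> V'\<close> by simp
    next
      fix x y z assume "(x,y) \<in> R" "(y,z) \<in> R"
      then have "x \<in> V'" "z \<in> V'" "(fst x, fst y) \<in> real_circ B V" "(fst y, fst z) \<in> real_circ B V"
        unfolding R_def by simp_all
      moreover have "(fst x, fst z) \<in> real_circ B V" using preorder_onD3[OF CBV] calculation(3,4) by metis
      ultimately show "(x,z) \<in> R" unfolding R_def by simp
    qed
    show "GenE V' \<subseteq> R"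
    proof
      fix p assume "p \<in> GenE V'"
      then obtain e1 e2 a k where p: "p = (e1,e2)" "e1 \<in> V' \<inter> Wk a k" "e2 \<in> V' \<inter> Wk a k"
        "(fst e1, fst e2) \<in> real_circ B (fst ` (V' \<inter> Wk a k))"
        unfolding GenE_def by blast
      have "real_circ B (fst ` (V' \<inter> Wk a k)) \<subseteq> real_circ B V"
        by (rule circ_mono[OF real_circ_circ fst_img_open[OF V'] V]) (use sub in blast)
      then show "p \<in> R" unfolding R_def using p by blast
    qed
  qed
  then show ?thesis using xy unfolding R_def by blast
qed

lemma CE_bwd:
  assumes V': "openin TE V'" and sub: "V' \<subseteq> Wk a k"
    and pq: "(p,q) \<in> real_circ B (fst ` V')"
  shows "(gk a k p, gk a k q) \<in> CE V'"
proof -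
  have eq: "fst ` V' = fst ` (V' \<inter> Wk a k)" using sub by blast
  have o: "openin (real_top B) (fst ` V')" unfolding eq by (rule fst_img_open[OF V'])
  have "p \<in> fst ` V'" "q \<in> fst ` V'"
    using preorder_onD1[OF circ_preorder[OF real_circ_circ o]] pq by auto
  then obtain ep eq' where ep: "ep \<in> V'" "p = fst ep" and eq': "eq' \<in> V'" "q = fst eq'" by blast
  have g: "gk a k p = ep" "gk a k q = eq'" using Wk_eq sub ep eq' by blast+
  have "(ep, eq') \<in> GenE V'"
    by (rule GenE_I[of _ _ a k]) (use ep eq' sub pq eq in auto)
  then show ?thesis using g pc_gen[of "GenE V'" V'] unfolding CE_def by auto
qed

end


context pcs begin

lemma seg_lemma:
  assumes x: "x \<in> fst B n"
    and st: "(s,t) \<in> Sst n {z \<in> topspace (cube n). real_pt B n x z \<in> Ua a}"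
  shows "La a (real_pt B n x t) - La a (real_pt B n x s) = (\<Sum>i<n. t i) - (\<Sum>i<n. s i)"
proof -
  define Pre where "Pre = {z \<in> topspace (cube n). real_pt B n x z \<in> Ua a}"
  have sP: "s \<in> Pre" "t \<in> Pre" and segP: "\<And>\<tau>. \<tau> \<in> {0..1} \<Longrightarrow> seg s t \<tau> \<in> Pre"
    using st unfolding Sst_def Pre_def[symmetric] by auto
  have stop: "s \<in> topspace (cube n)" "t \<in> topspace (cube n)" using sP unfolding Pre_def by auto
  define f where "f = (\<lambda>\<tau>. La a (real_pt B n x (seg s t \<tau>)) - (\<Sum>i<n. seg s t \<tau> i))"
  have c1: "continuous_map (top_of_set {0..1}) (real_top B) (\<lambda>\<tau>. real_pt B n x (seg s t \<tau>))"
    using continuous_map_compose[OF seg_cont[OF stop] real_pt_cont[OF x]] by (simp add: o_def)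
  have c2: "continuous_map (top_of_set {0..1}) (subtopology (real_top B) (Ua a)) (\<lambda>\<tau>. real_pt B n x (seg s t \<tau>))"
    unfolding continuous_map_in_subtopology using c1 segP unfolding Pre_def by auto
  have c3: "continuous_map (top_of_set {0..1}) euclideanreal (\<lambda>\<tau>. La a (real_pt B n x (seg s t \<tau>)))"
    using continuous_map_compose[OF c2 La_cont] by (simp add: o_def)
  have c4: "continuous_map (top_of_set {0..1}) euclideanreal (\<lambda>\<tau>. \<Sum>i<n. seg s t \<tau> i)"
    unfolding continuous_map_iff_continuous seg_def by (intro continuous_intros)
  have fc: "continuous_on {0..1} f"
    using continuous_map_diff[OF c3 c4] unfolding f_def continuous_map_iff_continuous .
  have fint: "\<exists>m::int. f \<tau> = of_int m" if "\<tau> \<in> {0..1}" for \<tau>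
  proof -
    define z where "z = seg s t \<tau>"
    have z: "z \<in> topspace (cube n)" "real_pt B n x z \<in> Ua a" using segP[OF that] unfolding z_def Pre_def by auto
    have "exp (\<i> * of_real (2 * pi * La a (real_pt B n x z))) = Gf (real_pt B n x z)"
      using La_exp Ua_sub z(2) by blast
    also have "\<dots> = G0 n z" by (rule Gf_pt[OF x z(1)])
    finally have "exp (\<i> * of_real (2 * pi * La a (real_pt B n x z))) = exp (\<i> * of_real (2 * pi * (\<Sum>i<n. z i)))"
      unfolding G0_def .
    then obtain m :: int where "La a (real_pt B n x z) = (\<Sum>i<n. z i) + of_int m" using expeq_int by blast
    then show ?thesis unfolding f_def z_def[symmetric] by auto
  qed
  have "f constant_on {0..1}"
  proof (rule continuous_discrete_range_constant[OF connected_Icc fc])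
    fix \<tau> :: real assume \<tau>: "\<tau> \<in> {0..1}"
    show "\<exists>e>0. \<forall>y. y \<in> {0..1} \<and> f y \<noteq> f \<tau> \<longrightarrow> e \<le> norm (f y - f \<tau>)"
    proof (intro exI[of _ 1] conjI allI impI)
      fix y :: real assume y: "y \<in> {0..1} \<and> f y \<noteq> f \<tau>"
      obtain m1 :: int where m1: "f y = of_int m1" using fint y by blast
      obtain m2 :: int where m2: "f \<tau> = of_int m2" using fint \<tau> by blast
      have "m1 \<noteq> m2" using y m1 m2 by auto
      then have "1 \<le> \<bar>m1 - m2\<bar>" by linarith
      then have "(1::real) \<le> \<bar>of_int (m1 - m2)\<bar>" by (metis of_int_1_le_iff of_int_abs)
      then show "1 \<le> norm (f y - f \<tau>)" using m1 m2 by simp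
    qed simp
  qed
  then have "f 0 = f 1" unfolding constant_on_def by force
  then show ?thesis unfolding f_def by simp
qed

lemma dcube_gen:
  assumes x: "x \<in> fst B n"
    and st: "(s,t) \<in> dcube_circ n {z \<in> topspace (cube n). real_pt B n x z \<in> Ua a}"
  shows "s \<in> topspace (cube n) \<and> t \<in> topspace (cube n) \<and> lec n s t \<and>
    La a (real_pt B n x t) - La a (real_pt B n x s) = (\<Sum>i<n. t i) - (\<Sum>i<n. s i)"
proof -
  define Pre where "Pre = {z \<in> topspace (cube n). real_pt B n x z \<in> Ua a}"
  have Po: "openin (cube n) Pre" unfolding Pre_def by (rule pre_open[OF Ua_open x])
  define R where "R = {(s,t). s \<in> Pre \<and> t \<in> Pre \<and> lec n s t \<and>
    La a (real_pt B n x t) - La a (real_pt B n x s) = (\<Sum>i<n. t i) - (\<Sum>i<n. s i)}"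
  have "M n Pre \<subseteq> R" unfolding M_def
  proof (rule pc_least)
    show "preorder_on Pre R"
    proof (rule preorder_onI)
      show "R \<subseteq> Pre \<times> Pre" unfolding R_def by blast
      fix u assume "u \<in> Pre" then show "(u,u) \<in> R" unfolding R_def lec_def by simp
    next
      fix u v w assume "(u,v) \<in> R" "(v,w) \<in> R"
      then show "(u,w) \<in> R" unfolding R_def lec_def by (auto intro: order_trans)
    qed
    show "Sst n Pre \<subseteq> R"
    proof
      fix p assume p: "p \<in> Sst n Pre"
      obtain u v where uv: "p = (u,v)" by (cases p)
      have "La a (real_pt B n x v) - La a (real_pt B n x u) = (\<Sum>i<n. v i) - (\<Sum>i<n. u i)"
        by (rule seg_lemma[OF x]) (use p uv in \<open>simp add: Pre_def\<close>)
      then show "p \<in> R" using p uv unfolding R_def Sst_def by auto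
    qed
  qed
  then have "(s,t) \<in> R" using dcube_sub_M[OF Po] st unfolding Pre_def by blast
  then show ?thesis unfolding R_def Pre_def by auto
qed

lemma Lmono:
  assumes "(p,q) \<in> real_circ B (Ua a)"
  shows "p \<in> Ua a \<and> q \<in> Ua a \<and> La a p \<le> La a q \<and> (La a p = La a q \<longrightarrow> p = q)"
proof -
  define R where "R = {(p,q). p \<in> Ua a \<and> q \<in> Ua a \<and> La a p \<le> La a q \<and> (La a p = La a q \<longrightarrow> p = q)}"
  have "Cf B (Ua a) \<subseteq> R" unfolding Cf_def
  proof (rule pc_least)
    show "preorder_on (Ua a) R"
    proof (rule preorder_onI)
      show "R \<subseteq> Ua a \<times> Ua a" unfolding R_def by blast
      fix u assume "u \<in> Ua a" then show "(u,u) \<in> R" unfolding R_def by simp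
    next
      fix u v w assume uv: "(u,v) \<in> R" and vw: "(v,w) \<in> R"
      then have "u \<in> Ua a" "w \<in> Ua a" "La a u \<le> La a v" "La a v \<le> La a w"
        "La a u = La a v \<longrightarrow> u = v" "La a v = La a w \<longrightarrow> v = w" unfolding R_def by auto
      then show "(u,w) \<in> R" unfolding R_def by auto
    qed
    show "GenR B (Ua a) \<subseteq> R"
    proof
      fix pq assume "pq \<in> GenR B (Ua a)"
      then obtain n x s t where pq: "pq = (real_pt B n x s, real_pt B n x t)" "x \<in> fst B n"
        "(s,t) \<in> dcube_circ n {z \<in> topspace (cube n). real_pt B n x z \<in> Ua a}"
        unfolding GenR_def by blast
      have inU: "real_pt B n x s \<in> Ua a" "real_pt B n x t \<in> Ua a"
        using preorder_onD1[OF circ_preorder[OF dcube_circ pre_open[OF Ua_open pq(2)]]] pq(3) by auto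
      have g: "s \<in> topspace (cube n)" "t \<in> topspace (cube n)" "lec n s t"
        "La a (real_pt B n x t) - La a (real_pt B n x s) = (\<Sum>i<n. t i) - (\<Sum>i<n. s i)"
        using dcube_gen[OF pq(2,3)] by auto
      have d: "La a (real_pt B n x t) - La a (real_pt B n x s) = (\<Sum>i<n. t i - s i)"
        using g(4) by (simp add: sum_subtractf)
      have nn: "\<And>i. i \<in> {..<n} \<Longrightarrow> 0 \<le> t i - s i" using g(3) unfolding lec_def by auto
      have "0 \<le> (\<Sum>i<n. t i - s i)" by (rule sum_nonneg) (use nn in auto)
      then have le: "La a (real_pt B n x s) \<le> La a (real_pt B n x t)"
        using d by linarith
      have eq: "real_pt B n x s = real_pt B n x t" if "La a (real_pt B n x s) = La a (real_pt B n x t)"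
      proof -
        have "(\<Sum>i<n. t i - s i) = 0" using d that by simp
        moreover have "\<forall>i\<in>{..<n}. 0 \<le> t i - s i" using nn by blast
        ultimately have "\<forall>i\<in>{..<n}. t i - s i = 0"
          using sum_nonneg_eq_0_iff[of "{..<n}" "\<lambda>i. t i - s i"] by simp
        then have "s = t" using g(1,2) unfolding topspace_cube by (intro PiE_ext[of s "{..<n}" _ t]) auto
        then show ?thesis by simp
      qed
      show "pq \<in> R" unfolding R_def using pq(1) inU le eq by auto
    qed
  qed
  moreover have "real_circ B (Ua a) \<subseteq> Cf B (Ua a)" by (rule real_circ_sub[OF Ua_open])
  ultimately show ?thesis using assms unfolding R_def by blast
qed

lemma leq_antisym: "antisym (CE Eset)"
proof -
  define H where "H = {(x,y). x \<in> Eset \<and> y \<in> Eset \<and> ht x \<le> ht y \<and> (ht x = ht y \<longrightarrow> x = y)}"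
  have "CE Eset \<subseteq> H" unfolding CE_def
  proof (rule pc_least)
    show "preorder_on Eset H"
    proof (rule preorder_onI)
      show "H \<subseteq> Eset \<times> Eset" unfolding H_def by blast
      fix u assume "u \<in> Eset" then show "(u,u) \<in> H" unfolding H_def by simp
    next
      fix u v w assume "(u,v) \<in> H" "(v,w) \<in> H"
      then show "(u,w) \<in> H" unfolding H_def by auto
    qed
    show "GenE Eset \<subseteq> H"
    proof
      fix p assume "p \<in> GenE Eset"
      then obtain e1 e2 a k where p: "p = (e1,e2)" "e1 \<in> Eset \<inter> Wk a k" "e2 \<in> Eset \<inter> Wk a k"
        "(fst e1, fst e2) \<in> real_circ B (fst ` (Eset \<inter> Wk a k))"
        unfolding GenE_def by blast
      have "fst ` (Eset \<inter> Wk a k) = Ua a" using Wk_sub fst_Wk by (metis inf.absorb2)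
      then have L: "La a (fst e1) \<le> La a (fst e2)" "La a (fst e1) = La a (fst e2) \<longrightarrow> fst e1 = fst e2"
        using Lmono p(4) by auto
      have h: "ht e1 = La a (fst e1) + of_int k" "ht e2 = La a (fst e2) + of_int k"
        using p(2,3) unfolding Wk_def by auto
      have "ht e1 = ht e2 \<longrightarrow> e1 = e2"
      proof
        assume "ht e1 = ht e2"
        then have "fst e1 = fst e2" using h L(2) by simp
        then show "e1 = e2" using Wk_eq p(2,3) by (metis IntD2)
      qed
      then show "p \<in> H" unfolding H_def using p(1,2,3) h L(1) by auto
    qed
  qed
  then show ?thesis
  proof -
    assume sub: "CE Eset \<subseteq> H"
    show ?thesis
    proof (rule antisymI)
      fix x y assume "(x,y) \<in> CE Eset" "(y,x) \<in> CE Eset"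
      then have "(x,y) \<in> H" "(y,x) \<in> H" using sub by blast+
      then show "x = y" unfolding H_def by auto
    qed
  qed
qed

end


context pcs begin

lemma iso_Wk:
  "stream_iso (open_substream (TE, CE) (Wk a k)) (open_substream (real_top B, real_circ B) (Ua a)) fst"
  unfolding stream_iso_def open_substream_def fst_conv snd_conv
proof (intro conjI exI[of _ "gk a k"])
  have tsW: "topspace (subtopology TE (Wk a k)) = Wk a k"
    using Wk_sub by (auto simp: topspace_TE)
  have tsU: "topspace (subtopology (real_top B) (Ua a)) = Ua a"
    using Ua_sub by (auto simp: topspace_real_top)
  show "stream_map (subtopology TE (Wk a k), CE) (subtopology (real_top B) (Ua a), real_circ B) fst"
    unfolding stream_map_def fst_conv snd_conv
  proof (intro conjI allI impI)
    show "continuous_map (subtopology TE (Wk a k)) (subtopology (real_top B) (Ua a)) fst"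
      unfolding continuous_map_in_subtopology
    proof
      show "continuous_map (subtopology TE (Wk a k)) (real_top B) fst"
        by (rule continuous_map_from_subtopology[OF fst_cont])
      show "fst \<in> topspace (subtopology TE (Wk a k)) \<rightarrow> Ua a"
      proof (rule Pi_I)
        fix x assume "x \<in> topspace (subtopology TE (Wk a k))"
        then have "x \<in> Wk a k" using tsW by simp
        then have "fst x \<in> fst ` Wk a k" by (rule imageI)
        then show "fst x \<in> Ua a" using fst_Wk by simp
      qed
    qed
    fix V x y
    assume V: "openin (subtopology (real_top B) (Ua a)) V"
      and xy: "(x, y) \<in> CE {z \<in> topspace (subtopology TE (Wk a k)). fst z \<in> V}"
    have Vo: "openin (real_top B) V" using V openin_open_subtopology[OF Ua_open] by blast
    have "openin (subtopology TE (Wk a k)) {z \<in> topspace (subtopology TE (Wk a k)). fst z \<in> V}"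
      by (rule openin_continuous_map_preimage[OF continuous_map_from_subtopology[OF fst_cont] Vo])
    then have V'o: "openin TE {z \<in> topspace (subtopology TE (Wk a k)). fst z \<in> V}"
      using Wk_open by (rule openin_trans_full)
    show "(fst x, fst y) \<in> real_circ B V"
      by (rule CE_fwd[OF V'o Vo _ xy]) blast
  qed
  show "stream_map (subtopology (real_top B) (Ua a), real_circ B) (subtopology TE (Wk a k), CE) (gk a k)"
    unfolding stream_map_def fst_conv snd_conv
  proof (intro conjI allI impI)
    show "continuous_map (subtopology (real_top B) (Ua a)) (subtopology TE (Wk a k)) (gk a k)"
      unfolding continuous_map_in_subtopology
    proof
      show "continuous_map (subtopology (real_top B) (Ua a)) TE (gk a k)" by (rule gk_cont)
      show "gk a k \<in> topspace (subtopology (real_top B) (Ua a)) \<rightarrow> Wk a k"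
      proof (rule Pi_I)
        fix x assume "x \<in> topspace (subtopology (real_top B) (Ua a))"
        then have "x \<in> Ua a" using tsU by simp
        then show "gk a k x \<in> Wk a k" by (rule gk_in(1))
      qed
    qed
    fix V' p q
    assume V': "openin (subtopology TE (Wk a k)) V'"
      and pq: "(p, q) \<in> real_circ B {z \<in> topspace (subtopology (real_top B) (Ua a)). gk a k z \<in> V'}"
    have V'o: "openin TE V'" "V' \<subseteq> Wk a k" using V' openin_open_subtopology[OF Wk_open] by blast+
    have "{z \<in> topspace (subtopology (real_top B) (Ua a)). gk a k z \<in> V'} = fst ` V'"
    proof
      show "{z \<in> topspace (subtopology (real_top B) (Ua a)). gk a k z \<in> V'} \<subseteq> fst ` V'"
      proof
        fix z assume "z \<in> {z \<in> topspace (subtopology (real_top B) (Ua a)). gk a k z \<in> V'}"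
        then have "z \<in> Ua a" "gk a k z \<in> V'" using tsU by auto
        then show "z \<in> fst ` V'" using gk_in(2) by (metis image_eqI)
      qed
      show "fst ` V' \<subseteq> {z \<in> topspace (subtopology (real_top B) (Ua a)). gk a k z \<in> V'}"
      proof
        fix z assume "z \<in> fst ` V'"
        then obtain e where e: "e \<in> V'" "z = fst e" by blast
        then have "e \<in> Wk a k" using V'o(2) by blast
        then have "gk a k z = e" "z \<in> Ua a" using Wk_eq e(2) fst_Wk by blast+
        then show "z \<in> {z \<in> topspace (subtopology (real_top B) (Ua a)). gk a k z \<in> V'}"
          using e(1) tsU by simp
      qed
    qed
    then show "(gk a k p, gk a k q) \<in> CE V'"
      using CE_bwd[OF V'o] pq by simp
  qed
  show "\<forall>x\<in>topspace (subtopology TE (Wk a k)). gk a k (fst x) = x" using tsW Wk_eq by simp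
  show "\<forall>y\<in>topspace (subtopology (real_top B) (Ua a)). fst (gk a k y) = y" using tsU gk_in(2) by simp
qed

lemma covering: "stream_covering (TE, CE) (stream_realization B) fst"
  unfolding stream_covering_def stream_realization_def fst_conv snd_conv
proof (intro conjI)
  show "is_stream (TE, CE)" unfolding is_stream_def using CE_circ by simp
  show "is_stream (real_top B, real_circ B)" unfolding is_stream_def using real_circ_circ by simp
  show "stream_map (TE, CE) (real_top B, real_circ B) fst"
    unfolding stream_map_def fst_conv snd_conv
  proof (intro conjI allI impI)
    show "continuous_map TE (real_top B) fst" by (rule fst_cont)
    fix V x y assume Vo: "openin (real_top B) V" and xy: "(x, y) \<in> CE {z \<in> topspace TE. fst z \<in> V}"
    have V'o: "openin TE {z \<in> topspace TE. fst z \<in> V}"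
      by (rule openin_continuous_map_preimage[OF fst_cont Vo])
    show "(fst x, fst y) \<in> real_circ B V" by (rule CE_fwd[OF V'o Vo _ xy]) blast
  qed
  show "fst ` topspace TE = topspace (real_top B)"
  proof
    show "fst ` topspace TE \<subseteq> topspace (real_top B)"
      unfolding topspace_TE topspace_real_top
    proof
      fix P assume "P \<in> fst ` Eset"
      then obtain e where "e \<in> Eset" "P = fst e" by blast
      then show "P \<in> quot" using Eset_iff by simp
    qed
    show "topspace (real_top B) \<subseteq> fst ` topspace TE"
    proof
      fix P assume "P \<in> topspace (real_top B)"
      then have "P \<in> Ua 0 \<union> Ua (1/2)" using subsetD[OF Ua_cover] unfolding topspace_real_top by blast
      then obtain a where "P \<in> Ua a" by (rule UnE)
      then have "gk a 0 P \<in> Wk a 0" "fst (gk a 0 P) = P" by (rule gk_in)+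
      then have "gk a 0 P \<in> Eset" "fst (gk a 0 P) = P" using Wk_sub by blast+
      then show "P \<in> fst ` topspace TE" unfolding topspace_TE by (metis image_eqI)
    qed
  qed
  show "\<exists>\<U>. (\<forall>U\<in>\<U>. openin (real_top B) U) \<and> \<Union>\<U> = topspace (real_top B) \<and>
    (\<forall>U\<in>\<U>. \<exists>\<W>. (\<forall>W\<in>\<W>. openin TE W) \<and> pairwise disjnt \<W> \<and>
      \<Union>\<W> = {e \<in> topspace TE. fst e \<in> U} \<and>
      (\<forall>W\<in>\<W>. stream_iso (open_substream (TE, CE) W) (open_substream (real_top B, real_circ B) U) fst))"
  proof (intro exI[of _ "{Ua 0, Ua (1/2)}"] conjI ballI)
    fix U assume "U \<in> {Ua 0, Ua (1/2)}"
    then show "openin (real_top B) U" using Ua_open by (cases "U = Ua 0") auto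
  next
    show "\<Union>{Ua 0, Ua (1/2)} = topspace (real_top B)"
      using Ua_cover Ua_sub[of 0] Ua_sub[of "1/2"] unfolding topspace_real_top by auto
  next
    fix U assume "U \<in> {Ua 0, Ua (1/2)}"
    then have "U = Ua 0 \<or> U = Ua (1/2)" by simp
    then obtain a where a: "U = Ua a" by (rule disjE) (rule that; assumption)+
    show "\<exists>\<W>. (\<forall>W\<in>\<W>. openin TE W) \<and> pairwise disjnt \<W> \<and>
      \<Union>\<W> = {e \<in> topspace TE. fst e \<in> U} \<and>
      (\<forall>W\<in>\<W>. stream_iso (open_substream (TE, CE) W) (open_substream (real_top B, real_circ B) U) fst)"
    proof (intro exI[of _ "range (Wk a)"] conjI ballI)
      fix W assume "W \<in> range (Wk a)"
      then obtain k where "W = Wk a k" by (rule rangeE)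
      then show "openin TE W" using Wk_open by simp
    next
      show "pairwise disjnt (range (Wk a))"
        unfolding pairwise_def disjnt_def
      proof (intro ballI impI)
        fix X Y assume "X \<in> range (Wk a)" "Y \<in> range (Wk a)" "X \<noteq> Y"
        then obtain k k' where "X = Wk a k" "Y = Wk a k'" by (auto simp: image_iff)
        then show "X \<inter> Y = {}" using Wk_disj \<open>X \<noteq> Y\<close> by metis
      qed
    next
      show "\<Union>(range (Wk a)) = {e \<in> topspace TE. fst e \<in> U}"
        unfolding a topspace_TE Wk_cover by blast
    next
      fix W assume "W \<in> range (Wk a)"
      then obtain k where "W = Wk a k" by (rule rangeE)
      then show "stream_iso (open_substream (TE, CE) W) (open_substream (real_top B, real_circ B) U) fst"
        using iso_Wk a by simp
    qed
  qed
qed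

lemma leq_E: "antisym (leq (TE, CE))"
  unfolding leq_def using leq_antisym by (simp add: topspace_TE)

end

theorem mainTheorem1:
  fixes B :: "'c precubical"
  assumes "precubical_set B"
  shows "\<exists>(E :: ('c rpt \<times> (real \<Rightarrow> 'c rpt) set) stream) \<rho>.
           stream_covering E (stream_realization B) \<rho> \<and> antisym (leq E)"
proof -
  interpret pcs B by unfold_locales (rule assms)
  show ?thesis by (rule exI[of _ "(TE, CE)"], rule exI[of _ fst]) (use covering leq_E in simp)
qed


end
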